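(* Let $X$ be a homogeneous chain that is not simple. The following are equivalent: (1) the topological group $(\mathrm{Aut}(X),\tau_p)$ (respectively $(\mathrm{Aut}(X),\tau_\partial)$) is Roelcke precompact; (2) for every proper regular interval $J$ of $X$ the topological groups $(\mathrm{Aut}(J),\tau_p)$ (respectively $(\mathrm{Aut}(J),\tau_\partial)$) and $(\mathrm{Aut}(X/J),\tau_\partial)$ are Roelcke precompact; (3) there exists a proper regular interval $J$ of $X$ such that the topological groups $(\mathrm{Aut}(J),\tau_p)$ (respectively $(\mathrm{Aut}(J),\tau_\partial)$) and $(\mathrm{Aut}(X/J),\tau_\partial)$ are Roelcke precompact.
   Context: Chain: linearly ordered set; $\mathrm{Aut}(Y)$: group of order-preserving bijections; $X$ homogeneous: $\mathrm{Aut}(X)$ acts transitively. An interval is a convex subset; $J$ is regular if for all $x,y\in J$, $g\in\mathrm{Aut}(X)$, $g(x)\in J\Rightarrow g(y)\in J$; proper if neither a singleton nor $X$. A homogeneous chain is simple if it has no proper regular interval. For a proper regular interval $J$, $X/J$ is the chain of equivalence classes of the relation $x\sim_J y\iff\forall g\in\mathrm{Aut}(X)\,(g(x)\in J\Rightarrow g(y)\in J)$ (these classes are the images of $J$ under automorphisms), with the induced order. $\tau_p$: pointwise convergence topology w.r.t. the order topology; $\tau_\partial$: permutation topology (identity neighbourhood base: pointwise stabilizers of finite sets). Roelcke precompact: the Roelcke uniformity (greatest lower bound of left and right uniformities) is totally bounded. *)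

theory Defs
  imports Main
begin

text \<open>Automorphisms are order-preserving bijections of S,
  made extensional (identity outside S) so that they form a group under composition.\<close>

definition Aut :: "'a set \<Rightarrow> 'a rel \<Rightarrow> ('a \<Rightarrow> 'a) set" where
  "Aut S r = {f. bij_betw f S S \<and> (\<forall>x\<in>S. \<forall>y\<in>S. (x, y) \<in> r \<longleftrightarrow> (f x, f y) \<in> r)
                 \<and> (\<forall>x. x \<notin> S \<longrightarrow> f x = x)}"

definition homogeneous_chain :: "'a set \<Rightarrow> 'a rel \<Rightarrow> bool" where
  "homogeneous_chain S r \<longleftrightarrow> linear_order_on S r \<and> (\<forall>x\<in>S. \<forall>y\<in>S. \<exists>g\<in>Aut S r. g x = y)"

definition chain_interval :: "'a set \<Rightarrow> 'a rel \<Rightarrow> 'a set \<Rightarrow> bool" where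
  "chain_interval S r J \<longleftrightarrow> J \<subseteq> S \<and> J \<noteq> {} \<and>
     (\<forall>x\<in>J. \<forall>z\<in>J. \<forall>y\<in>S. (x, y) \<in> r \<and> (y, z) \<in> r \<longrightarrow> y \<in> J)"

definition regular_interval :: "'a set \<Rightarrow> 'a rel \<Rightarrow> 'a set \<Rightarrow> bool" where
  "regular_interval S r J \<longleftrightarrow> chain_interval S r J \<and>
     (\<forall>x\<in>J. \<forall>y\<in>J. \<forall>g\<in>Aut S r. g x \<in> J \<longrightarrow> g y \<in> J)"

definition proper_interval :: "'a set \<Rightarrow> 'a set \<Rightarrow> bool" where
  "proper_interval S J \<longleftrightarrow> J \<noteq> S \<and> \<not> (\<exists>x. J = {x})"

definition simple_chain :: "'a set \<Rightarrow> 'a rel \<Rightarrow> bool" where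
  "simple_chain S r \<longleftrightarrow> homogeneous_chain S r \<and>
     \<not> (\<exists>J. regular_interval S r J \<and> proper_interval S J)"

definition restrict_rel :: "'a rel \<Rightarrow> 'a set \<Rightarrow> 'a rel" where
  "restrict_rel r J = r \<inter> (J \<times> J)"

definition reg_equiv :: "'a set \<Rightarrow> 'a rel \<Rightarrow> 'a set \<Rightarrow> 'a \<Rightarrow> 'a \<Rightarrow> bool" where
  "reg_equiv S r J x y \<longleftrightarrow> x \<in> S \<and> y \<in> S \<and> (\<forall>g\<in>Aut S r. g x \<in> J \<longrightarrow> g y \<in> J)"

definition quot_carrier :: "'a set \<Rightarrow> 'a rel \<Rightarrow> 'a set \<Rightarrow> 'a set set" where
  "quot_carrier S r J = {{y \<in> S. reg_equiv S r J x y} | x. x \<in> S}"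

definition quot_rel :: "'a set \<Rightarrow> 'a rel \<Rightarrow> 'a set \<Rightarrow> 'a set rel" where
  "quot_rel S r J = {(C, D). C \<in> quot_carrier S r J \<and> D \<in> quot_carrier S r J \<and>
      (C = D \<or> (\<forall>c\<in>C. \<forall>d\<in>D. (c, d) \<in> r))}"

text \<open>Order topology: a is in the interior of V, i.e. V contains an open interval
  (possibly unbounded on either side) around a with endpoints in S.\<close>
definition order_lt :: "'a rel \<Rightarrow> 'a \<Rightarrow> 'a \<Rightarrow> bool" where
  "order_lt r x y \<longleftrightarrow> (x, y) \<in> r \<and> x \<noteq> y"

definition order_nbhd :: "'a set \<Rightarrow> 'a rel \<Rightarrow> 'a \<Rightarrow> 'a set \<Rightarrow> bool" where
  "order_nbhd S r a V \<longleftrightarrow> a \<in> S \<and>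
     (\<exists>lo hi. (\<forall>l. lo = Some l \<longrightarrow> l \<in> S \<and> order_lt r l a) \<and>
              (\<forall>h. hi = Some h \<longrightarrow> h \<in> S \<and> order_lt r a h) \<and>
              {y \<in> S. (\<forall>l. lo = Some l \<longrightarrow> order_lt r l y) \<and>
                     (\<forall>h. hi = Some h \<longrightarrow> order_lt r y h)} \<subseteq> V)"

text \<open>Identity neighbourhoods in Aut(S) for tau_p (pointwise convergence w.r.t. the order
  topology) and tau_partial (permutation topology).\<close>
definition nbhd_p :: "'a set \<Rightarrow> 'a rel \<Rightarrow> ('a \<Rightarrow> 'a) set \<Rightarrow> bool" where
  "nbhd_p S r U \<longleftrightarrow> U \<subseteq> Aut S r \<and>
     (\<exists>A W. finite A \<and> A \<subseteq> S \<and> (\<forall>a\<in>A. order_nbhd S r a (W a)) \<and>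
            {g \<in> Aut S r. \<forall>a\<in>A. g a \<in> W a} \<subseteq> U)"

definition nbhd_perm :: "'a set \<Rightarrow> 'a rel \<Rightarrow> ('a \<Rightarrow> 'a) set \<Rightarrow> bool" where
  "nbhd_perm S r U \<longleftrightarrow> U \<subseteq> Aut S r \<and>
     (\<exists>A. finite A \<and> A \<subseteq> S \<and> {g \<in> Aut S r. \<forall>a\<in>A. g a = a} \<subseteq> U)"

text \<open>Roelcke precompactness: the Roelcke uniformity (entourages {(x,y). y \<in> U x U},
  U an identity neighbourhood) is totally bounded.\<close>
definition roelcke_precompact :: "('a \<Rightarrow> 'a) set \<Rightarrow> (('a \<Rightarrow> 'a) set \<Rightarrow> bool) \<Rightarrow> bool" where
  "roelcke_precompact G N \<longleftrightarrow> (\<forall>U. N U \<longrightarrow>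
     (\<exists>F. finite F \<and> F \<subseteq> G \<and> G \<subseteq> {u \<circ> f \<circ> v | u f v. u \<in> U \<and> f \<in> F \<and> v \<in> U}))"

definition RP_p :: "'a set \<Rightarrow> 'a rel \<Rightarrow> bool" where
  "RP_p S r \<longleftrightarrow> roelcke_precompact (Aut S r) (nbhd_p S r)"

definition RP_perm :: "'a set \<Rightarrow> 'a rel \<Rightarrow> bool" where
  "RP_perm S r \<longleftrightarrow> roelcke_precompact (Aut S r) (nbhd_perm S r)"

end

theory Submission
  imports Defs "HOL-Library.FuncSet"
begin

definition ginv :: "'a set \<Rightarrow> ('a \<Rightarrow> 'a) \<Rightarrow> 'a \<Rightarrow> 'a" where
  "ginv S g = (\<lambda>x. if x \<in> S then inv_into S g x else x)"

definition convex :: "'a set \<Rightarrow> 'a rel \<Rightarrow> 'a set \<Rightarrow> bool" where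
  "convex S r C \<longleftrightarrow> C \<subseteq> S \<and> (\<forall>x\<in>C. \<forall>z\<in>C. \<forall>y\<in>S. (x, y) \<in> r \<and> (y, z) \<in> r \<longrightarrow> y \<in> C)"

locale lin =
  fixes S :: "'a set" and r :: "'a rel"
  assumes lo: "linear_order_on S r"
begin

lemma le_sub: "(x, y) \<in> r \<Longrightarrow> x \<in> S \<and> y \<in> S"
  using lo unfolding linear_order_on_def partial_order_on_def preorder_on_def by blast

lemma le_refl: "x \<in> S \<Longrightarrow> (x, x) \<in> r"
  using lo unfolding linear_order_on_def partial_order_on_def preorder_on_def refl_on_def by blast

lemma le_trans: "(x, y) \<in> r \<Longrightarrow> (y, z) \<in> r \<Longrightarrow> (x, z) \<in> r"
  using lo unfolding linear_order_on_def partial_order_on_def preorder_on_def trans_def by blast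

lemma le_antisym: "(x, y) \<in> r \<Longrightarrow> (y, x) \<in> r \<Longrightarrow> x = y"
  using lo unfolding linear_order_on_def partial_order_on_def antisym_def by blast

lemma le_total: assumes "x \<in> S" "y \<in> S" shows "(x, y) \<in> r \<or> (y, x) \<in> r"
proof (cases "x = y")
  case True
  then show ?thesis using le_refl assms by blast
next
  case False
  from assms show ?thesis using False lo unfolding linear_order_on_def total_on_def by blast
qed

lemma lt_iff_not_le: "x \<in> S \<Longrightarrow> y \<in> S \<Longrightarrow> order_lt r x y \<longleftrightarrow> (y, x) \<notin> r"
  unfolding order_lt_def using le_total le_antisym le_refl by blast

lemma convexD: "convex S r C \<Longrightarrow> x \<in> C \<Longrightarrow> z \<in> C \<Longrightarrow> y \<in> S \<Longrightarrow> (x, y) \<in> r \<Longrightarrow> (y, z) \<in> r \<Longrightarrow> y \<in> C"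
  unfolding convex_def by blast

lemma convex_sub: "convex S r C \<Longrightarrow> x \<in> C \<Longrightarrow> x \<in> S"
  unfolding convex_def by blast

lemma convex_side:
  assumes "convex S r C" "y \<in> S" "y \<notin> C"
  shows "(\<forall>c\<in>C. (c, y) \<in> r) \<or> (\<forall>c\<in>C. (y, c) \<in> r)"
proof (rule ccontr)
  assume "\<not> ?thesis"
  then obtain c1 c2 where c: "c1 \<in> C" "c2 \<in> C" "(c1, y) \<notin> r" "(y, c2) \<notin> r" by blast
  have S: "c1 \<in> S" "c2 \<in> S" using assms(1) c convex_sub by metis+
  have 1: "(y, c1) \<in> r" using le_total[OF S(1) assms(2)] c(3) by blast
  have 2: "(c2, y) \<in> r" using le_total[OF S(2) assms(2)] c(4) by blast
  have "y \<in> C" using convexD[OF assms(1) c(2) c(1) assms(2) 2 1] .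
  then show False using assms(3) by blast
qed

lemma convex_disjoint:
  assumes "convex S r C" "convex S r D" "C \<inter> D = {}"
  shows "(\<forall>c\<in>C. \<forall>d\<in>D. (c, d) \<in> r) \<or> (\<forall>c\<in>C. \<forall>d\<in>D. (d, c) \<in> r)"
proof (rule ccontr)
  assume "\<not> ?thesis"
  then obtain c1 d1 c2 d2 where c: "c1 \<in> C" "d1 \<in> D" "(c1, d1) \<notin> r" "c2 \<in> C" "d2 \<in> D" "(d2, c2) \<notin> r"
    by blast
  have S: "c1 \<in> S" "c2 \<in> S" "d1 \<in> S" "d2 \<in> S" using assms c convex_sub by metis+
  have 1: "(d1, c1) \<in> r" using le_total[OF S(1) S(3)] c(3) by blast
  have 2: "(c2, d2) \<in> r" using le_total[OF S(2) S(4)] c(6) by blast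
  show False
  proof (cases "(c1, d2) \<in> r")
    case True
    have "c1 \<in> D" using convexD[OF assms(2) c(2) c(5) S(1) 1 True] .
    then show False using c assms(3) by blast
  next
    case False
    then have 3: "(d2, c1) \<in> r" using le_total[OF S(1) S(4)] by blast
    have "d2 \<in> C" using convexD[OF assms(1) c(4) c(1) S(4) 2 3] .
    then show False using c assms(3) by blast
  qed
qed

lemma Aut_mem: "g \<in> Aut S r \<Longrightarrow> x \<in> S \<Longrightarrow> g x \<in> S"
  unfolding Aut_def bij_betw_def by blast

lemma Aut_out: "g \<in> Aut S r \<Longrightarrow> x \<notin> S \<Longrightarrow> g x = x"
  unfolding Aut_def by blast

lemma Aut_le: "g \<in> Aut S r \<Longrightarrow> x \<in> S \<Longrightarrow> y \<in> S \<Longrightarrow> (g x, g y) \<in> r \<longleftrightarrow> (x, y) \<in> r"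
  unfolding Aut_def by blast

lemma Aut_bij: "g \<in> Aut S r \<Longrightarrow> bij_betw g S S"
  unfolding Aut_def by blast

lemma Aut_mem_iff: "g \<in> Aut S r \<Longrightarrow> g x \<in> S \<longleftrightarrow> x \<in> S"
  using Aut_mem Aut_out by metis

lemma Aut_inj: assumes "g \<in> Aut S r" "g x = g y" shows "x = y"
proof (cases "x \<in> S")
  case True
  then have "y \<in> S" using Aut_mem_iff[OF assms(1)] assms(2) by metis
  then show ?thesis using True assms Aut_bij unfolding bij_betw_def inj_on_def by blast
next
  case False
  then have "y \<notin> S" using Aut_mem_iff[OF assms(1)] assms(2) by metis
  then show ?thesis using False assms Aut_out by metis
qed

lemma Aut_image: "g \<in> Aut S r \<Longrightarrow> g ` S = S"
  unfolding Aut_def bij_betw_def by blast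

lemma Aut_lt: "g \<in> Aut S r \<Longrightarrow> x \<in> S \<Longrightarrow> y \<in> S \<Longrightarrow> order_lt r (g x) (g y) \<longleftrightarrow> order_lt r x y"
  unfolding order_lt_def using Aut_le Aut_inj by blast

lemma Aut_intro:
  assumes "\<And>x. x \<in> S \<Longrightarrow> f x \<in> S" "\<And>y. y \<in> S \<Longrightarrow> \<exists>x\<in>S. f x = y"
    "\<And>x y. x \<in> S \<Longrightarrow> y \<in> S \<Longrightarrow> order_lt r x y \<Longrightarrow> order_lt r (f x) (f y)"
    "\<And>x. x \<notin> S \<Longrightarrow> f x = x"
  shows "f \<in> Aut S r"
proof -
  have inj: "inj_on f S"
  proof (rule inj_onI)
    fix x y assume xy: "x \<in> S" "y \<in> S" "f x = f y"
    show "x = y"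
    proof (rule ccontr)
      assume "x \<noteq> y"
      then have "order_lt r x y \<or> order_lt r y x" using le_total xy unfolding order_lt_def by blast
      then show False using assms(3)[of x y] assms(3)[of y x] xy unfolding order_lt_def by auto
    qed
  qed
  have "bij_betw f S S" unfolding bij_betw_def using inj assms(1,2) by blast
  moreover have "(x, y) \<in> r \<longleftrightarrow> (f x, f y) \<in> r" if "x \<in> S" "y \<in> S" for x y
  proof
    assume "(x, y) \<in> r"
    then show "(f x, f y) \<in> r"
      using assms(3)[of x y] that le_refl assms(1) unfolding order_lt_def by (cases "x = y") auto
  next
    assume a: "(f x, f y) \<in> r"
    show "(x, y) \<in> r"
    proof (rule ccontr)
      assume "(x, y) \<notin> r"
      then have "order_lt r y x" using lt_iff_not_le that by blast
      then have "order_lt r (f y) (f x)" using assms(3) that by blast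
      then show False using a le_antisym unfolding order_lt_def by blast
    qed
  qed
  ultimately show ?thesis unfolding Aut_def using assms(4) by blast
qed

lemma Aut_id: "id \<in> Aut S r"
  unfolding Aut_def by auto

lemma Aut_id': "(\<lambda>x. x) \<in> Aut S r"
  using Aut_id by (simp add: id_def)

lemma Aut_comp: assumes "g \<in> Aut S r" "h \<in> Aut S r" shows "g \<circ> h \<in> Aut S r"
  unfolding Aut_def
proof (intro CollectI conjI ballI allI impI)
  show "bij_betw (g \<circ> h) S S" using bij_betw_trans Aut_bij assms by blast
  show "(x, y) \<in> r \<longleftrightarrow> ((g \<circ> h) x, (g \<circ> h) y) \<in> r" if "x \<in> S" "y \<in> S" for x y
    using Aut_le Aut_mem assms that by simp
  show "(g \<circ> h) x = x" if "x \<notin> S" for x using Aut_out[OF assms(2) that] Aut_out[OF assms(1) that] by simp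
qed

lemma ginv_l: assumes "g \<in> Aut S r" shows "ginv S g (g x) = x"
proof (cases "x \<in> S")
  case True
  then have "g x \<in> S" using Aut_mem assms by blast
  moreover have "inv_into S g (g x) = x" using inv_into_f_f Aut_bij[OF assms] True unfolding bij_betw_def by metis
  ultimately show ?thesis unfolding ginv_def by simp
next
  case False
  then show ?thesis using Aut_out[OF assms False] unfolding ginv_def by simp
qed

lemma ginv_r: assumes "g \<in> Aut S r" shows "g (ginv S g x) = x"
proof (cases "x \<in> S")
  case True
  then have "x \<in> g ` S" using Aut_image[OF assms] by simp
  then have "g (inv_into S g x) = x" by (rule f_inv_into_f)
  then show ?thesis using True unfolding ginv_def by simp
next
  case False
  then show ?thesis using Aut_out[OF assms False] unfolding ginv_def by simp
qed

lemma ginv_mem: "g \<in> Aut S r \<Longrightarrow> x \<in> S \<Longrightarrow> ginv S g x \<in> S"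
  by (metis Aut_mem Aut_out ginv_r)

lemma Aut_ginv: "g \<in> Aut S r \<Longrightarrow> ginv S g \<in> Aut S r"
proof (rule Aut_intro)
  assume g: "g \<in> Aut S r"
  show "ginv S g x \<in> S" if "x \<in> S" for x using ginv_mem g that .
  show "\<exists>x\<in>S. ginv S g x = y" if "y \<in> S" for y using g that ginv_l Aut_mem by blast
  show "order_lt r (ginv S g x) (ginv S g y)" if "x \<in> S" "y \<in> S" "order_lt r x y" for x y
    using Aut_lt[OF g, of "ginv S g x" "ginv S g y"] ginv_r[OF g] ginv_mem[OF g] that by auto
  show "ginv S g x = x" if "x \<notin> S" for x using that unfolding ginv_def by simp
qed

lemma ginv_comp_l: "g \<in> Aut S r \<Longrightarrow> ginv S g \<circ> g = id"
  using ginv_l by fastforce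

lemma ginv_comp_r: "g \<in> Aut S r \<Longrightarrow> g \<circ> ginv S g = id"
  using ginv_r by fastforce

end


definition basic :: "'a set \<Rightarrow> 'a rel \<Rightarrow> 'a set \<Rightarrow> ('a \<Rightarrow> 'a set) \<Rightarrow> ('a \<Rightarrow> 'a) set" where
  "basic S r A W = {g \<in> Aut S r. \<forall>a\<in>A. g a \<in> W a}"

definition dc :: "('a \<Rightarrow> 'a) set \<Rightarrow> ('a \<Rightarrow> 'a) set \<Rightarrow> ('a \<Rightarrow> 'a) set" where
  "dc U F = {u \<circ> f \<circ> v | u f v. u \<in> U \<and> f \<in> F \<and> v \<in> U}"

definition RPb :: "('a set \<Rightarrow> 'a rel \<Rightarrow> 'a \<Rightarrow> 'a set \<Rightarrow> bool) \<Rightarrow> 'a set \<Rightarrow> 'a rel \<Rightarrow> bool" where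
  "RPb T S r \<longleftrightarrow> (\<forall>A W. finite A \<and> A \<subseteq> S \<and> (\<forall>a\<in>A. T S r a (W a)) \<longrightarrow>
      (\<exists>F. finite F \<and> F \<subseteq> Aut S r \<and> Aut S r \<subseteq> dc (basic S r A W) F))"

definition Tperm :: "'a set \<Rightarrow> 'a rel \<Rightarrow> 'a \<Rightarrow> 'a set \<Rightarrow> bool" where
  "Tperm S r a V \<longleftrightarrow> a \<in> V"

lemma dc_mono: "U \<subseteq> U' \<Longrightarrow> dc U F \<subseteq> dc U' F"
  unfolding dc_def by blast

lemma dcI: "u \<in> U \<Longrightarrow> f \<in> F \<Longrightarrow> v \<in> U \<Longrightarrow> g = u \<circ> f \<circ> v \<Longrightarrow> g \<in> dc U F"
  unfolding dc_def by blast

lemma dcE: "g \<in> dc U F \<Longrightarrow> (\<And>u f v. u \<in> U \<Longrightarrow> f \<in> F \<Longrightarrow> v \<in> U \<Longrightarrow> g = u \<circ> f \<circ> v \<Longrightarrow> P) \<Longrightarrow> P"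
  unfolding dc_def by blast

lemma basic_sub: "basic S r A W \<subseteq> Aut S r"
  unfolding basic_def by blast

lemma rp_dc: "roelcke_precompact G N \<longleftrightarrow> (\<forall>U. N U \<longrightarrow> (\<exists>F. finite F \<and> F \<subseteq> G \<and> G \<subseteq> dc U F))"
  unfolding roelcke_precompact_def dc_def by (rule refl)

lemma RP_p_iff: "RP_p S r \<longleftrightarrow> RPb order_nbhd S r"
proof
  assume H: "RP_p S r"
  show "RPb order_nbhd S r"
    unfolding RPb_def
  proof (intro allI impI)
    fix A W assume A: "finite A \<and> A \<subseteq> S \<and> (\<forall>a\<in>A. order_nbhd S r a (W a))"
    have "{g \<in> Aut S r. \<forall>a\<in>A. g a \<in> W a} \<subseteq> basic S r A W" unfolding basic_def by (rule order_refl)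
    then have "nbhd_p S r (basic S r A W)"
      unfolding nbhd_p_def using A by (intro conjI basic_sub exI[of _ A] exI[of _ W]) auto
    then show "\<exists>F. finite F \<and> F \<subseteq> Aut S r \<and> Aut S r \<subseteq> dc (basic S r A W) F"
      using H unfolding RP_p_def rp_dc by simp
  qed
next
  assume H: "RPb order_nbhd S r"
  show "RP_p S r"
    unfolding RP_p_def rp_dc
  proof (intro allI impI)
    fix U assume U: "nbhd_p S r U"
    then obtain A W where A: "finite A" "A \<subseteq> S" "\<forall>a\<in>A. order_nbhd S r a (W a)"
      "{g \<in> Aut S r. \<forall>a\<in>A. g a \<in> W a} \<subseteq> U"
      unfolding nbhd_p_def by blast
    have "\<exists>F. finite F \<and> F \<subseteq> Aut S r \<and> Aut S r \<subseteq> dc (basic S r A W) F"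
      using H A(1,2,3) unfolding RPb_def by simp
    then obtain F where F: "finite F" "F \<subseteq> Aut S r" "Aut S r \<subseteq> dc (basic S r A W) F"
      by blast
    have "basic S r A W \<subseteq> U" using A(4) unfolding basic_def .
    then have "dc (basic S r A W) F \<subseteq> dc U F" by (rule dc_mono)
    then show "\<exists>F. finite F \<and> F \<subseteq> Aut S r \<and> Aut S r \<subseteq> dc U F"
      using F by blast
  qed
qed

lemma RP_perm_iff: "RP_perm S r \<longleftrightarrow> RPb Tperm S r"
proof
  assume H: "RP_perm S r"
  show "RPb Tperm S r"
    unfolding RPb_def
  proof (intro allI impI)
    fix A W assume A: "finite A \<and> A \<subseteq> S \<and> (\<forall>a\<in>A. Tperm S r a (W a))"
    have "{g \<in> Aut S r. \<forall>a\<in>A. g a = a} \<subseteq> basic S r A W"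
      using A unfolding basic_def Tperm_def by auto
    then have "nbhd_perm S r (basic S r A W)"
      unfolding nbhd_perm_def using A by (intro conjI basic_sub exI[of _ A]) auto
    then show "\<exists>F. finite F \<and> F \<subseteq> Aut S r \<and> Aut S r \<subseteq> dc (basic S r A W) F"
      using H unfolding RP_perm_def rp_dc by simp
  qed
next
  assume H: "RPb Tperm S r"
  show "RP_perm S r"
    unfolding RP_perm_def rp_dc
  proof (intro allI impI)
    fix U assume U: "nbhd_perm S r U"
    then obtain A where A: "finite A" "A \<subseteq> S"
      "{g \<in> Aut S r. \<forall>a\<in>A. g a = a} \<subseteq> U"
      unfolding nbhd_perm_def by blast
    have T: "\<forall>a\<in>A. Tperm S r a ({a})" unfolding Tperm_def by simp
    have "\<exists>F. finite F \<and> F \<subseteq> Aut S r \<and> Aut S r \<subseteq> dc (basic S r A (\<lambda>a. {a})) F"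
      using H A(1,2) T unfolding RPb_def by simp
    then obtain F where F: "finite F" "F \<subseteq> Aut S r" "Aut S r \<subseteq> dc (basic S r A (\<lambda>a. {a})) F"
      by blast
    have "basic S r A (\<lambda>a. {a}) \<subseteq> U" using A(3) unfolding basic_def by auto
    then have "dc (basic S r A (\<lambda>a. {a})) F \<subseteq> dc U F" by (rule dc_mono)
    then show "\<exists>F. finite F \<and> F \<subseteq> Aut S r \<and> Aut S r \<subseteq> dc U F"
      using F by blast
  qed
qed


definition ival :: "'a set \<Rightarrow> 'a rel \<Rightarrow> 'a option \<Rightarrow> 'a option \<Rightarrow> 'a set" where
  "ival S r lo hi = {y \<in> S. (\<forall>l. lo = Some l \<longrightarrow> order_lt r l y) \<and> (\<forall>h. hi = Some h \<longrightarrow> order_lt r y h)}"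

lemma order_nbhd_iff: "order_nbhd S r a V \<longleftrightarrow> a \<in> S \<and>
  (\<exists>lo hi. (\<forall>l. lo = Some l \<longrightarrow> l \<in> S \<and> order_lt r l a) \<and>
           (\<forall>h. hi = Some h \<longrightarrow> h \<in> S \<and> order_lt r a h) \<and> ival S r lo hi \<subseteq> V)"
  unfolding order_nbhd_def ival_def by (rule refl)

lemma order_nbhdI: "a \<in> S \<Longrightarrow> (\<forall>l. lo = Some l \<longrightarrow> l \<in> S \<and> order_lt r l a) \<Longrightarrow>
    (\<forall>h. hi = Some h \<longrightarrow> h \<in> S \<and> order_lt r a h) \<Longrightarrow> ival S r lo hi \<subseteq> V \<Longrightarrow> order_nbhd S r a V"
  unfolding order_nbhd_iff by blast

lemma order_nbhdE:
  assumes "order_nbhd S r a V"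
  obtains lo hi where "a \<in> S" "\<forall>l. lo = Some l \<longrightarrow> l \<in> S \<and> order_lt r l a"
    "\<forall>h. hi = Some h \<longrightarrow> h \<in> S \<and> order_lt r a h" "ival S r lo hi \<subseteq> V"
  using assms unfolding order_nbhd_iff by blast

lemma on_mono: "order_nbhd S r a V \<Longrightarrow> V \<subseteq> V' \<Longrightarrow> order_nbhd S r a V'"
  unfolding order_nbhd_iff by blast

lemma on_mem: "order_nbhd S r a V \<Longrightarrow> a \<in> V"
  unfolding order_nbhd_iff ival_def by blast

lemma on_self: "a \<in> S \<Longrightarrow> order_nbhd S r a S"
  by (rule order_nbhdI[where lo=None and hi=None]) (auto simp: ival_def)

lemma restr_iff: "x \<in> J \<Longrightarrow> y \<in> J \<Longrightarrow> (x, y) \<in> restrict_rel r J \<longleftrightarrow> (x, y) \<in> r"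
  unfolding restrict_rel_def by blast

lemma lt_restr: "x \<in> J \<Longrightarrow> y \<in> J \<Longrightarrow> order_lt (restrict_rel r J) x y \<longleftrightarrow> order_lt r x y"
  unfolding order_lt_def restrict_rel_def by blast

context lin
begin

lemma lt_trans: "order_lt r x y \<Longrightarrow> order_lt r y z \<Longrightarrow> order_lt r x z"
  unfolding order_lt_def using le_trans le_antisym by blast

lemma le_lt_trans: "(x, y) \<in> r \<Longrightarrow> order_lt r y z \<Longrightarrow> order_lt r x z"
  unfolding order_lt_def using le_trans le_antisym by blast

lemma lt_le_trans: "order_lt r x y \<Longrightarrow> (y, z) \<in> r \<Longrightarrow> order_lt r x z"
  unfolding order_lt_def using le_trans le_antisym by blast

lemma lt_sub: "order_lt r x y \<Longrightarrow> x \<in> S \<and> y \<in> S"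
  unfolding order_lt_def using le_sub by blast

lemma lt_asym: "order_lt r x y \<Longrightarrow> (y, x) \<notin> r"
  unfolding order_lt_def using le_antisym by blast

lemma lin_restr0: assumes "J \<subseteq> S" shows "linear_order_on J (restrict_rel r J)"
proof -
  have a: "restrict_rel r J \<subseteq> J \<times> J" unfolding restrict_rel_def by blast
  have b: "refl_on J (restrict_rel r J)" unfolding refl_on_def restrict_rel_def using assms le_refl by blast
  have c: "trans (restrict_rel r J)" unfolding trans_def restrict_rel_def using le_trans by blast
  have d: "antisym (restrict_rel r J)" unfolding antisym_def restrict_rel_def using le_antisym by blast
  have e: "total_on J (restrict_rel r J)" unfolding total_on_def restrict_rel_def using assms le_total by blast
  show "linear_order_on J (restrict_rel r J)"
    unfolding linear_order_on_def partial_order_on_def preorder_on_def using a b c d e by (intro conjI)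
qed

lemma lin_restr: assumes "J \<subseteq> S" shows "lin J (restrict_rel r J)"
  using lin_restr0[OF assms] by (rule lin.intro)

lemma lo_merge:
  assumes "\<forall>l. lo1 = Some l \<longrightarrow> l \<in> S \<and> order_lt r l a" "\<forall>l. lo2 = Some l \<longrightarrow> l \<in> S \<and> order_lt r l a"
  obtains lo where "\<forall>l. lo = Some l \<longrightarrow> l \<in> S \<and> order_lt r l a"
    "\<And>y. (\<forall>l. lo = Some l \<longrightarrow> order_lt r l y) \<Longrightarrow> (\<forall>l. lo1 = Some l \<longrightarrow> order_lt r l y) \<and> (\<forall>l. lo2 = Some l \<longrightarrow> order_lt r l y)"
proof (cases lo1)
  case None
  show ?thesis by (rule that[of lo2]) (use assms None in simp_all)
next
  case (Some l1)
  show ?thesis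
  proof (cases lo2)
    case None
    show ?thesis by (rule that[of lo1]) (use assms None in simp_all)
  next
    case (Some l2)
    show ?thesis
    proof (cases "(l1, l2) \<in> r")
      case True
      show ?thesis
      proof (rule that[of lo2])
        show "\<forall>l. lo2 = Some l \<longrightarrow> l \<in> S \<and> order_lt r l a" using assms(2) .
        fix y assume "\<forall>l. lo2 = Some l \<longrightarrow> order_lt r l y"
        then have "order_lt r l2 y" using \<open>lo2 = Some l2\<close> by simp
        then have "order_lt r l1 y" using le_lt_trans[OF True] by blast
        then show "(\<forall>l. lo1 = Some l \<longrightarrow> order_lt r l y) \<and> (\<forall>l. lo2 = Some l \<longrightarrow> order_lt r l y)"
          using \<open>order_lt r l2 y\<close> \<open>lo1 = Some l1\<close> \<open>lo2 = Some l2\<close> by simp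
      qed
    next
      case False
      have l: "l1 \<in> S" "l2 \<in> S" using assms \<open>lo1 = Some l1\<close> \<open>lo2 = Some l2\<close> by auto
      then have T: "(l2, l1) \<in> r" using le_total False by blast
      show ?thesis
      proof (rule that[of lo1])
        show "\<forall>l. lo1 = Some l \<longrightarrow> l \<in> S \<and> order_lt r l a" using assms(1) .
        fix y assume "\<forall>l. lo1 = Some l \<longrightarrow> order_lt r l y"
        then have "order_lt r l1 y" using \<open>lo1 = Some l1\<close> by simp
        then have "order_lt r l2 y" using le_lt_trans[OF T] by blast
        then show "(\<forall>l. lo1 = Some l \<longrightarrow> order_lt r l y) \<and> (\<forall>l. lo2 = Some l \<longrightarrow> order_lt r l y)"
          using \<open>order_lt r l1 y\<close> \<open>lo1 = Some l1\<close> \<open>lo2 = Some l2\<close> by simp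
      qed
    qed
  qed
qed

lemma hi_merge:
  assumes "\<forall>h. hi1 = Some h \<longrightarrow> h \<in> S \<and> order_lt r a h" "\<forall>h. hi2 = Some h \<longrightarrow> h \<in> S \<and> order_lt r a h"
  obtains hi where "\<forall>h. hi = Some h \<longrightarrow> h \<in> S \<and> order_lt r a h"
    "\<And>y. (\<forall>h. hi = Some h \<longrightarrow> order_lt r y h) \<Longrightarrow> (\<forall>h. hi1 = Some h \<longrightarrow> order_lt r y h) \<and> (\<forall>h. hi2 = Some h \<longrightarrow> order_lt r y h)"
proof (cases hi1)
  case None
  show ?thesis by (rule that[of hi2]) (use assms None in simp_all)
next
  case (Some h1)
  show ?thesis
  proof (cases hi2)
    case None
    show ?thesis by (rule that[of hi1]) (use assms None in simp_all)
  next
    case (Some h2)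
    show ?thesis
    proof (cases "(h1, h2) \<in> r")
      case True
      show ?thesis
      proof (rule that[of hi1])
        show "\<forall>h. hi1 = Some h \<longrightarrow> h \<in> S \<and> order_lt r a h" using assms(1) .
        fix y assume "\<forall>h. hi1 = Some h \<longrightarrow> order_lt r y h"
        then have "order_lt r y h1" using \<open>hi1 = Some h1\<close> by simp
        then have "order_lt r y h2" using lt_le_trans True by blast
        then show "(\<forall>h. hi1 = Some h \<longrightarrow> order_lt r y h) \<and> (\<forall>h. hi2 = Some h \<longrightarrow> order_lt r y h)"
          using \<open>order_lt r y h1\<close> \<open>hi1 = Some h1\<close> \<open>hi2 = Some h2\<close> by simp
      qed
    next
      case False
      have l: "h1 \<in> S" "h2 \<in> S" using assms \<open>hi1 = Some h1\<close> \<open>hi2 = Some h2\<close> by auto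
      then have T: "(h2, h1) \<in> r" using le_total False by blast
      show ?thesis
      proof (rule that[of hi2])
        show "\<forall>h. hi2 = Some h \<longrightarrow> h \<in> S \<and> order_lt r a h" using assms(2) .
        fix y assume "\<forall>h. hi2 = Some h \<longrightarrow> order_lt r y h"
        then have "order_lt r y h2" using \<open>hi2 = Some h2\<close> by simp
        then have "order_lt r y h1" using lt_le_trans T by blast
        then show "(\<forall>h. hi1 = Some h \<longrightarrow> order_lt r y h) \<and> (\<forall>h. hi2 = Some h \<longrightarrow> order_lt r y h)"
          using \<open>order_lt r y h2\<close> \<open>hi1 = Some h1\<close> \<open>hi2 = Some h2\<close> by simp
      qed
    qed
  qed
qed

lemma on_inter:
  assumes "order_nbhd S r a V1" "order_nbhd S r a V2"
  shows "order_nbhd S r a (V1 \<inter> V2)"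
proof -
  obtain lo1 hi1 where 1: "a \<in> S" "\<forall>l. lo1 = Some l \<longrightarrow> l \<in> S \<and> order_lt r l a"
    "\<forall>h. hi1 = Some h \<longrightarrow> h \<in> S \<and> order_lt r a h" "ival S r lo1 hi1 \<subseteq> V1"
    using assms(1) by (rule order_nbhdE)
  obtain lo2 hi2 where 2: "\<forall>l. lo2 = Some l \<longrightarrow> l \<in> S \<and> order_lt r l a"
    "\<forall>h. hi2 = Some h \<longrightarrow> h \<in> S \<and> order_lt r a h" "ival S r lo2 hi2 \<subseteq> V2"
    using assms(2) by (rule order_nbhdE)
  obtain lo where lo: "\<forall>l. lo = Some l \<longrightarrow> l \<in> S \<and> order_lt r l a"
    "\<And>y. (\<forall>l. lo = Some l \<longrightarrow> order_lt r l y) \<Longrightarrow> (\<forall>l. lo1 = Some l \<longrightarrow> order_lt r l y) \<and> (\<forall>l. lo2 = Some l \<longrightarrow> order_lt r l y)"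
    using lo_merge[OF 1(2) 2(1)] by blast
  obtain hi where hi: "\<forall>h. hi = Some h \<longrightarrow> h \<in> S \<and> order_lt r a h"
    "\<And>y. (\<forall>h. hi = Some h \<longrightarrow> order_lt r y h) \<Longrightarrow> (\<forall>h. hi1 = Some h \<longrightarrow> order_lt r y h) \<and> (\<forall>h. hi2 = Some h \<longrightarrow> order_lt r y h)"
    using hi_merge[OF 1(3) 2(2)] by blast
  have "ival S r lo hi \<subseteq> ival S r lo1 hi1 \<inter> ival S r lo2 hi2"
  proof
    fix y assume "y \<in> ival S r lo hi"
    then have "y \<in> S" "\<forall>l. lo = Some l \<longrightarrow> order_lt r l y" "\<forall>h. hi = Some h \<longrightarrow> order_lt r y h"
      unfolding ival_def by auto
    then show "y \<in> ival S r lo1 hi1 \<inter> ival S r lo2 hi2"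
      using lo(2)[of y] hi(2)[of y] unfolding ival_def by blast
  qed
  then show ?thesis using 1(1,4) 2(3) lo(1) hi(1) by (intro order_nbhdI[of a S lo r hi]) auto
qed

lemma on_inv:
  assumes g: "g \<in> Aut S r" and n: "order_nbhd S r a V"
  shows "order_nbhd S r (g a) (g ` V)"
proof -
  obtain lo hi where 1: "a \<in> S" "\<forall>l. lo = Some l \<longrightarrow> l \<in> S \<and> order_lt r l a"
    "\<forall>h. hi = Some h \<longrightarrow> h \<in> S \<and> order_lt r a h" "ival S r lo hi \<subseteq> V"
    using n by (rule order_nbhdE)
  show ?thesis
  proof (rule order_nbhdI[of _ _ "map_option g lo" _ "map_option g hi"])
    show "g a \<in> S" using Aut_mem g 1(1) by blast
    show "\<forall>l. map_option g lo = Some l \<longrightarrow> l \<in> S \<and> order_lt r l (g a)"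
      using 1(1,2) Aut_mem[OF g] Aut_lt[OF g] by auto
    show "\<forall>h. map_option g hi = Some h \<longrightarrow> h \<in> S \<and> order_lt r (g a) h"
      using 1(1,3) Aut_mem[OF g] Aut_lt[OF g] by auto
    show "ival S r (map_option g lo) (map_option g hi) \<subseteq> g ` V"
    proof
      fix y assume y: "y \<in> ival S r (map_option g lo) (map_option g hi)"
      define z where "z = ginv S g y"
      have yS: "y \<in> S" using y unfolding ival_def by blast
      have zS: "z \<in> S" unfolding z_def using ginv_mem[OF g yS] .
      have gz: "g z = y" unfolding z_def using ginv_r[OF g] .
      have "z \<in> ival S r lo hi"
        unfolding ival_def
      proof (intro CollectI conjI allI impI)
        show "z \<in> S" by (rule zS)
        fix l assume "lo = Some l"
        then have "order_lt r (g l) y" "l \<in> S" using y 1(2) unfolding ival_def by auto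
        then show "order_lt r l z" using Aut_lt[OF g \<open>l \<in> S\<close> zS] gz by simp
      next
        fix h assume "hi = Some h"
        then have "order_lt r y (g h)" "h \<in> S" using y 1(3) unfolding ival_def by auto
        then show "order_lt r z h" using Aut_lt[OF g zS \<open>h \<in> S\<close>] gz by simp
      qed
      then show "y \<in> g ` V" using 1(4) gz by blast
    qed
  qed
qed

lemma on_restr:
  assumes J: "convex S r J" and b: "b \<in> J" and n: "order_nbhd S r b V"
  shows "order_nbhd J (restrict_rel r J) b (V \<inter> J)"
proof -
  obtain lo hi where 1: "b \<in> S" "\<forall>l. lo = Some l \<longrightarrow> l \<in> S \<and> order_lt r l b"
    "\<forall>h. hi = Some h \<longrightarrow> h \<in> S \<and> order_lt r b h" "ival S r lo hi \<subseteq> V"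
    using n by (rule order_nbhdE)
  define lo' where "lo' = (case lo of Some l \<Rightarrow> if l \<in> J then Some l else None | None \<Rightarrow> None)"
  define hi' where "hi' = (case hi of Some h \<Rightarrow> if h \<in> J then Some h else None | None \<Rightarrow> None)"
  have lo'S: "lo' = Some l \<Longrightarrow> lo = Some l \<and> l \<in> J" for l unfolding lo'_def by (cases lo) (auto split: if_splits)
  have hi'S: "hi' = Some h \<Longrightarrow> hi = Some h \<and> h \<in> J" for h unfolding hi'_def by (cases hi) (auto split: if_splits)
  have loN: "lo = Some l \<Longrightarrow> l \<notin> J \<Longrightarrow> lo' = None" for l unfolding lo'_def by auto
  have hiN: "hi = Some h \<Longrightarrow> h \<notin> J \<Longrightarrow> hi' = None" for h unfolding hi'_def by auto
  show ?thesis
  proof (rule order_nbhdI[of _ _ lo' _ hi'])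
    show "b \<in> J" by (rule b)
    show "\<forall>l. lo' = Some l \<longrightarrow> l \<in> J \<and> order_lt (restrict_rel r J) l b"
    proof (intro allI impI)
      fix l assume "lo' = Some l"
      then have "lo = Some l" "l \<in> J" using lo'S by auto
      then show "l \<in> J \<and> order_lt (restrict_rel r J) l b" using 1(2) lt_restr[OF _ b] by auto
    qed
    show "\<forall>h. hi' = Some h \<longrightarrow> h \<in> J \<and> order_lt (restrict_rel r J) b h"
    proof (intro allI impI)
      fix h assume "hi' = Some h"
      then have "hi = Some h" "h \<in> J" using hi'S by auto
      then show "h \<in> J \<and> order_lt (restrict_rel r J) b h" using 1(3) lt_restr[OF b] by auto
    qed
    show "ival J (restrict_rel r J) lo' hi' \<subseteq> V \<inter> J"
    proof
      fix y assume y: "y \<in> ival J (restrict_rel r J) lo' hi'"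
      have yJ: "y \<in> J" using y unfolding ival_def by blast
      have yS: "y \<in> S" using convex_sub[OF J yJ] .
      have "y \<in> ival S r lo hi"
        unfolding ival_def
      proof (intro CollectI conjI allI impI)
        show "y \<in> S" by (rule yS)
        fix l assume l: "lo = Some l"
        show "order_lt r l y"
        proof (cases "l \<in> J")
          case True
          then have "lo' = Some l" using l unfolding lo'_def by simp
          then show ?thesis using y yJ True lt_restr unfolding ival_def by fastforce
        next
          case False
          have lS: "l \<in> S" and lb: "order_lt r l b" using 1(2) l by auto
          have "(\<forall>c\<in>J. (c, l) \<in> r) \<or> (\<forall>c\<in>J. (l, c) \<in> r)" using convex_side[OF J lS False] .
          moreover have "(b, l) \<notin> r" using lt_asym[OF lb] .
          ultimately have "(l, y) \<in> r" using b yJ by blast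
          then show ?thesis using False yJ unfolding order_lt_def by blast
        qed
      next
        fix h assume h: "hi = Some h"
        show "order_lt r y h"
        proof (cases "h \<in> J")
          case True
          then have "hi' = Some h" using h unfolding hi'_def by simp
          then show ?thesis using y yJ True lt_restr unfolding ival_def by fastforce
        next
          case False
          have hS: "h \<in> S" and bh: "order_lt r b h" using 1(3) h by auto
          have "(\<forall>c\<in>J. (c, h) \<in> r) \<or> (\<forall>c\<in>J. (h, c) \<in> r)" using convex_side[OF J hS False] .
          moreover have "(h, b) \<notin> r" using lt_asym[OF bh] .
          ultimately have "(y, h) \<in> r" using b yJ by blast
          then show ?thesis using False yJ unfolding order_lt_def by blast
        qed
      qed
      then show "y \<in> V \<inter> J" using 1(4) yJ by blast
    qed
  qed
qed

lemma on_ext: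
  assumes J: "convex S r J" and n: "order_nbhd J (restrict_rel r J) b V"
  shows "order_nbhd S r b (V \<union> (S - J))"
proof -
  obtain lo hi where 1: "b \<in> J" "\<forall>l. lo = Some l \<longrightarrow> l \<in> J \<and> order_lt (restrict_rel r J) l b"
    "\<forall>h. hi = Some h \<longrightarrow> h \<in> J \<and> order_lt (restrict_rel r J) b h" "ival J (restrict_rel r J) lo hi \<subseteq> V"
    using n by (rule order_nbhdE)
  show ?thesis
  proof (rule order_nbhdI[of _ _ lo _ hi])
    show "b \<in> S" using convex_sub[OF J 1(1)] .
    show "\<forall>l. lo = Some l \<longrightarrow> l \<in> S \<and> order_lt r l b"
    proof (intro allI impI)
      fix l assume "lo = Some l"
      then have "l \<in> J" "order_lt (restrict_rel r J) l b" using 1(2) by auto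
      then show "l \<in> S \<and> order_lt r l b" using lt_restr[OF _ 1(1)] convex_sub[OF J] by auto
    qed
    show "\<forall>h. hi = Some h \<longrightarrow> h \<in> S \<and> order_lt r b h"
    proof (intro allI impI)
      fix h assume "hi = Some h"
      then have "h \<in> J" "order_lt (restrict_rel r J) b h" using 1(3) by auto
      then show "h \<in> S \<and> order_lt r b h" using lt_restr[OF 1(1)] convex_sub[OF J] by auto
    qed
    show "ival S r lo hi \<subseteq> V \<union> (S - J)"
    proof
      fix y assume y: "y \<in> ival S r lo hi"
      show "y \<in> V \<union> (S - J)"
      proof (cases "y \<in> J")
        case True
        have "y \<in> ival J (restrict_rel r J) lo hi"
          unfolding ival_def
        proof (intro CollectI conjI allI impI)
          show "y \<in> J" by (rule True)
          fix l assume "lo = Some l" then show "order_lt (restrict_rel r J) l y"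
            using y 1(2) True lt_restr unfolding ival_def by fastforce
        next
          fix h assume "hi = Some h" then show "order_lt (restrict_rel r J) y h"
            using y 1(3) True lt_restr unfolding ival_def by fastforce
        qed
        then show ?thesis using 1(4) by blast
      next
        case False
        then show ?thesis using y unfolding ival_def by blast
      qed
    qed
  qed
qed

end


context lin
begin

lemma Aut_restr_sub:
  assumes J: "convex S r J" and k: "k \<in> Aut J (restrict_rel r J)"
  shows "k \<in> Aut S r"
proof -
  interpret LJ: lin J "restrict_rel r J" using lin_restr convex_sub[OF J] by blast
  have kJ: "x \<in> J \<Longrightarrow> k x \<in> J" for x using LJ.Aut_mem[OF k] .
  have kout: "x \<notin> J \<Longrightarrow> k x = x" for x using LJ.Aut_out[OF k] .
  have side: "order_lt r x y" if "x \<in> J" "y \<in> S" "y \<notin> J" "order_lt r x' y" "x' \<in> J" for x x' y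
  proof -
    have "(\<forall>c\<in>J. (c, y) \<in> r) \<or> (\<forall>c\<in>J. (y, c) \<in> r)" using convex_side[OF J that(2,3)] .
    moreover have "(y, x') \<notin> r" using lt_asym[OF that(4)] .
    ultimately have "(x, y) \<in> r" using that by blast
    then show ?thesis using that unfolding order_lt_def by blast
  qed
  have side2: "order_lt r y x" if "x \<in> J" "y \<in> S" "y \<notin> J" "order_lt r y x'" "x' \<in> J" for x x' y
  proof -
    have "(\<forall>c\<in>J. (c, y) \<in> r) \<or> (\<forall>c\<in>J. (y, c) \<in> r)" using convex_side[OF J that(2,3)] .
    moreover have "(x', y) \<notin> r" using lt_asym[OF that(4)] .
    ultimately have "(y, x) \<in> r" using that by blast
    then show ?thesis using that unfolding order_lt_def by blast
  qed
  have h1: "k x \<in> S" if "x \<in> S" for x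
  proof (cases "x \<in> J")
    case True
    then show ?thesis using kJ convex_sub[OF J] by blast
  next
    case False
    then show ?thesis using kout that by simp
  qed
  have h2: "\<exists>x\<in>S. k x = y" if "y \<in> S" for y
  proof (cases "y \<in> J")
    case True
    then have "y \<in> k ` J" using LJ.Aut_image[OF k] by simp
    then obtain x where x: "x \<in> J" "k x = y" by blast
    show ?thesis by (rule bexI[of _ x]) (use x convex_sub[OF J] in auto)
  next
    case False
    show ?thesis by (rule bexI[of _ y]) (simp_all add: kout False that)
  qed
  have h3: "order_lt r (k x) (k y)" if "x \<in> S" "y \<in> S" "order_lt r x y" for x y
  proof (cases "x \<in> J"; cases "y \<in> J")
    assume xy: "x \<in> J" "y \<in> J"
    then have "order_lt (restrict_rel r J) x y" using lt_restr[OF xy, of r] that(3) by simp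
    then have "order_lt (restrict_rel r J) (k x) (k y)" using LJ.Aut_lt[OF k xy] by simp
    then show ?thesis using lt_restr[OF kJ kJ, of x y r] xy by simp
  next
    assume "x \<in> J" "y \<notin> J"
    then show ?thesis using side[of "k x" y x] kJ[of x] kout[of y] that by simp
  next
    assume "x \<notin> J" "y \<in> J"
    then show ?thesis using side2[of "k y" x y] kJ[of y] kout[of x] that by simp
  next
    assume "x \<notin> J" "y \<notin> J"
    then show ?thesis using kout that by simp
  qed
  have h4: "k x = x" if "x \<notin> S" for x using kout convex_sub[OF J] that by blast
  show ?thesis by (rule Aut_intro[OF h1 h2 h3 h4])
qed

lemma restrJ_Aut:
  assumes J: "convex S r J" and g: "g \<in> Aut S r" and gJ: "g ` J = J"
  shows "(\<lambda>x. if x \<in> J then g x else x) \<in> Aut J (restrict_rel r J)"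
proof -
  interpret LJ: lin J "restrict_rel r J" using lin_restr convex_sub[OF J] by blast
  show ?thesis
  proof (rule LJ.Aut_intro)
    show "(if x \<in> J then g x else x) \<in> J" if "x \<in> J" for x using gJ that by auto
    show "\<exists>x\<in>J. (if x \<in> J then g x else x) = y" if "y \<in> J" for y
    proof -
      have "y \<in> g ` J" using gJ that by simp
      then obtain x where "x \<in> J" "g x = y" by blast
      then show ?thesis by (intro bexI[of _ x]) simp_all
    qed
    show "order_lt (restrict_rel r J) (if x \<in> J then g x else x) (if y \<in> J then g y else y)"
      if "x \<in> J" "y \<in> J" "order_lt (restrict_rel r J) x y" for x y
    proof -
      have S: "x \<in> S" "y \<in> S" using convex_sub[OF J] that by auto
      have "order_lt r x y" using lt_restr[OF that(1,2), of r] that(3) by simp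
      then have "order_lt r (g x) (g y)" using Aut_lt[OF g S] by simp
      moreover have gg: "g x \<in> J" "g y \<in> J" using gJ that by auto
      ultimately show ?thesis using lt_restr[OF gg, of r] that by simp
    qed
    show "(if x \<in> J then g x else x) = x" if "x \<notin> J" for x using that by simp
  qed
qed

end


locale base = lin X r for X :: "'a set" and r :: "'a rel" +
  fixes J :: "'a set"
  assumes hom: "\<forall>x\<in>X. \<forall>y\<in>X. \<exists>g\<in>Aut X r. g x = y"
    and reg: "regular_interval X r J"
    and prp: "proper_interval X J"
begin

abbreviation "G \<equiv> Aut X r"

lemma J_conv: "convex X r J"
  using reg unfolding regular_interval_def chain_interval_def convex_def by blast

lemma J_sub: "J \<subseteq> X"
  using J_conv unfolding convex_def by blast

lemma J_ne: "J \<noteq> {}"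
  using reg unfolding regular_interval_def chain_interval_def by blast

lemma regD: "x \<in> J \<Longrightarrow> y \<in> J \<Longrightarrow> g \<in> G \<Longrightarrow> g x \<in> J \<Longrightarrow> g y \<in> J"
  using reg unfolding regular_interval_def by blast

lemma homog: "x \<in> X \<Longrightarrow> y \<in> X \<Longrightarrow> \<exists>g\<in>G. g x = y"
  using hom by blast

lemma regJ:
  assumes g: "g \<in> G" and x: "x \<in> J" and gx: "g x \<in> J"
  shows "g ` J = J"
proof
  show "g ` J \<subseteq> J" using regD[OF x _ g gx] by blast
  show "J \<subseteq> g ` J"
  proof
    fix y assume y: "y \<in> J"
    have gi: "ginv X g \<in> G" using Aut_ginv[OF g] .
    have "ginv X g (g x) = x" using ginv_l[OF g] .
    then have "ginv X g y \<in> J" using regD[OF gx y gi] x by simp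
    moreover have "y = g (ginv X g y)" using ginv_r[OF g] by simp
    ultimately show "y \<in> g ` J" by blast
  qed
qed

lemma ginv_img: assumes g: "g \<in> G" and gA: "g ` A = B" shows "ginv X g ` B = A"
proof -
  have "ginv X g ` B = (ginv X g \<circ> g) ` A" using gA image_comp[of "ginv X g" g A] by simp
  also have "\<dots> = A" using ginv_comp_l[OF g] by simp
  finally show ?thesis .
qed

lemma J_no_max:
  assumes x: "x \<in> J"
  shows "\<exists>h\<in>J. order_lt r x h"
proof (rule ccontr)
  assume nm: "\<not> (\<exists>h\<in>J. order_lt r x h)"
  have "J \<noteq> {x}" using prp unfolding proper_interval_def by blast
  then obtain j where j: "j \<in> J" "j \<noteq> x" using x by blast
  have xX: "x \<in> X" and jX: "j \<in> X" using J_sub x j by auto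
  have "(j, x) \<in> r"
  proof (rule ccontr)
    assume "(j, x) \<notin> r"
    then have "order_lt r x j" using lt_iff_not_le[OF xX jX] by simp
    then show False using nm j by blast
  qed
  then have jx: "order_lt r j x" using j unfolding order_lt_def by simp
  obtain g where g: "g \<in> G" "g x = j" using homog[OF xX jX] by blast
  have gJ: "g ` J = J" using regJ[OF g(1) x] g(2) j(1) by simp
  have gi: "ginv X g \<in> G" using Aut_ginv[OF g(1)] .
  have giJ: "ginv X g ` J = J" using ginv_img[OF g(1) gJ] .
  define x' where "x' = ginv X g x"
  have x'J: "x' \<in> J" unfolding x'_def using giJ x by blast
  have x'X: "x' \<in> X" using J_sub x'J by blast
  have "ginv X g j = x" using ginv_l[OF g(1), of x] g(2) by simp
  then have "order_lt r x x'" using Aut_lt[OF gi jX xX] jx unfolding x'_def by simp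
  then show False using nm x'J by blast
qed

lemma J_no_min:
  assumes x: "x \<in> J"
  shows "\<exists>l\<in>J. order_lt r l x"
proof (rule ccontr)
  assume nm: "\<not> (\<exists>l\<in>J. order_lt r l x)"
  have "J \<noteq> {x}" using prp unfolding proper_interval_def by blast
  then obtain j where j: "j \<in> J" "j \<noteq> x" using x by blast
  have xX: "x \<in> X" and jX: "j \<in> X" using J_sub x j by auto
  have "(x, j) \<in> r"
  proof (rule ccontr)
    assume "(x, j) \<notin> r"
    then have "order_lt r j x" using lt_iff_not_le[OF jX xX] by simp
    then show False using nm j by blast
  qed
  then have jx: "order_lt r x j" using j unfolding order_lt_def by simp
  obtain g where g: "g \<in> G" "g x = j" using homog[OF xX jX] by blast
  have gJ: "g ` J = J" using regJ[OF g(1) x] g(2) j(1) by simp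
  have gi: "ginv X g \<in> G" using Aut_ginv[OF g(1)] .
  have giJ: "ginv X g ` J = J" using ginv_img[OF g(1) gJ] .
  define x' where "x' = ginv X g x"
  have x'J: "x' \<in> J" unfolding x'_def using giJ x by blast
  have x'X: "x' \<in> X" using J_sub x'J by blast
  have "ginv X g j = x" using ginv_l[OF g(1), of x] g(2) by simp
  then have "order_lt r x' x" using Aut_lt[OF gi xX jX] jx unfolding x'_def by simp
  then show False using nm x'J by blast
qed

lemma J_open: assumes x: "x \<in> J" shows "order_nbhd X r x J"
proof -
  obtain h where h: "h \<in> J" "order_lt r x h" using J_no_max[OF x] by blast
  obtain l where l: "l \<in> J" "order_lt r l x" using J_no_min[OF x] by blast
  show ?thesis
  proof (rule order_nbhdI[of _ _ "Some l" _ "Some h"])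
    show "x \<in> X" using x J_sub by blast
    show "\<forall>l'. Some l = Some l' \<longrightarrow> l' \<in> X \<and> order_lt r l' x" using l J_sub by auto
    show "\<forall>h'. Some h = Some h' \<longrightarrow> h' \<in> X \<and> order_lt r x h'" using h J_sub by auto
    show "ival X r (Some l) (Some h) \<subseteq> J"
    proof
      fix y assume "y \<in> ival X r (Some l) (Some h)"
      then have y: "y \<in> X" "order_lt r l y" "order_lt r y h" unfolding ival_def by auto
      show "y \<in> J" using convexD[OF J_conv l(1) h(1) y(1)] y(2,3) unfolding order_lt_def by blast
    qed
  qed
qed

end


context base
begin

definition cls :: "'a \<Rightarrow> 'a set" where
  "cls x = {y \<in> X. reg_equiv X r J x y}"

abbreviation "Q \<equiv> quot_carrier X r J"
abbreviation "qr \<equiv> quot_rel X r J"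

lemma Q_def': "Q = cls ` X"
  unfolding quot_carrier_def cls_def by blast

lemma exists_g: "x \<in> X \<Longrightarrow> \<exists>g\<in>G. g x \<in> J"
proof -
  assume x: "x \<in> X"
  obtain j where j: "j \<in> J" using J_ne by blast
  then have "j \<in> X" using J_sub by blast
  then obtain g where "g \<in> G" "g x = j" using homog[OF x] by blast
  then show ?thesis using j by auto
qed

lemma cls_char:
  assumes x: "x \<in> X" and g: "g \<in> G" and gx: "g x \<in> J"
  shows "cls x = {y \<in> X. g y \<in> J}"
proof
  show "cls x \<subseteq> {y \<in> X. g y \<in> J}"
    unfolding cls_def reg_equiv_def using g gx by blast
  show "{y \<in> X. g y \<in> J} \<subseteq> cls x"
  proof
    fix y assume y: "y \<in> {y \<in> X. g y \<in> J}"
    have "h y \<in> J" if h: "h \<in> G" "h x \<in> J" for h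
    proof -
      have hg: "h \<circ> ginv X g \<in> G" using Aut_comp[OF h(1) Aut_ginv[OF g]] .
      have "(h \<circ> ginv X g) (g x) \<in> J" using h(2) ginv_l[OF g] by simp
      then have "(h \<circ> ginv X g) (g y) \<in> J" using regD[OF gx _ hg] y by blast
      then show ?thesis using ginv_l[OF g] by simp
    qed
    then show "y \<in> cls x" unfolding cls_def reg_equiv_def using x y by blast
  qed
qed

lemma cls_sub: "cls x \<subseteq> X"
  unfolding cls_def by blast

lemma cls_self: "x \<in> X \<Longrightarrow> x \<in> cls x"
  using exists_g cls_char by blast

lemma cls_eq: assumes x: "x \<in> X" and y: "y \<in> cls x" shows "cls y = cls x"
proof -
  obtain g where g: "g \<in> G" "g x \<in> J" using exists_g[OF x] by blast
  have c: "cls x = {y \<in> X. g y \<in> J}" using cls_char[OF x g] .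
  then have "y \<in> X" "g y \<in> J" using y by auto
  then have "cls y = {y \<in> X. g y \<in> J}" using cls_char[OF _ g(1)] by blast
  then show ?thesis using c by simp
qed

lemma cls_J: assumes x: "x \<in> J" shows "cls x = J"
proof -
  have "cls x = {y \<in> X. id y \<in> J}" using cls_char[OF _ Aut_id] x J_sub by auto
  then show ?thesis using J_sub by auto
qed

lemma cls_img: assumes g: "g \<in> G" and x: "x \<in> X" shows "g ` cls x = cls (g x)"
proof -
  have gx: "g x \<in> X" using Aut_mem[OF g x] .
  obtain h where h: "h \<in> G" "h (g x) \<in> J" using exists_g[OF gx] by blast
  have c1: "cls (g x) = {y \<in> X. h y \<in> J}" using cls_char[OF gx h] .
  have hg: "h \<circ> g \<in> G" using Aut_comp[OF h(1) g] .
  have c2: "cls x = {y \<in> X. h (g y) \<in> J}" using cls_char[OF x hg] h(2) by simp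
  show ?thesis
  proof
    show "g ` cls x \<subseteq> cls (g x)" using c1 c2 Aut_mem[OF g] by auto
    show "cls (g x) \<subseteq> g ` cls x"
    proof
      fix z assume z: "z \<in> cls (g x)"
      then have zX: "z \<in> X" "h z \<in> J" using c1 by auto
      have "ginv X g z \<in> cls x" using c2 zX ginv_mem[OF g] ginv_r[OF g] by simp
      moreover have "z = g (ginv X g z)" using ginv_r[OF g] by simp
      ultimately show "z \<in> g ` cls x" by blast
    qed
  qed
qed

lemma cls_conv: assumes x: "x \<in> X" shows "convex X r (cls x)"
proof -
  obtain g where g: "g \<in> G" "g x \<in> J" using exists_g[OF x] by blast
  have c: "cls x = {y \<in> X. g y \<in> J}" using cls_char[OF x g] .
  show ?thesis
    unfolding convex_def
  proof (intro conjI ballI allI impI)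
    show "cls x \<subseteq> X" by (rule cls_sub)
    fix a b y assume a: "a \<in> cls x" and b: "b \<in> cls x" and y: "y \<in> X" and ab: "(a, y) \<in> r \<and> (y, b) \<in> r"
    have aX: "a \<in> X" "g a \<in> J" and bX: "b \<in> X" "g b \<in> J" using a b c by auto
    have "(g a, g y) \<in> r" "(g y, g b) \<in> r" using ab Aut_le[OF g(1)] aX bX y by auto
    then have "g y \<in> J" using convexD[OF J_conv aX(2) bX(2) Aut_mem[OF g(1) y]] by blast
    then show "y \<in> cls x" using c y by simp
  qed
qed

lemma cls_disj: assumes x: "x \<in> X" and y: "y \<in> X" and ne: "cls x \<noteq> cls y" shows "cls x \<inter> cls y = {}"
proof (rule ccontr)
  assume "cls x \<inter> cls y \<noteq> {}"
  then obtain z where z: "z \<in> cls x" "z \<in> cls y" by blast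
  have "cls z = cls x" using cls_eq[OF x z(1)] .
  moreover have "cls z = cls y" using cls_eq[OF y z(2)] .
  ultimately show False using ne by simp
qed

lemma QE: assumes "C \<in> Q" obtains x where "x \<in> X" "C = cls x"
  using assms unfolding Q_def' by blast

lemma clsQ: "x \<in> X \<Longrightarrow> cls x \<in> Q"
  unfolding Q_def' by blast

lemma Q_mem_cls: assumes C: "C \<in> Q" and x: "x \<in> C" shows "cls x = C"
proof -
  obtain y where y: "y \<in> X" "C = cls y" using C by (rule QE)
  show ?thesis using cls_eq[OF y(1)] x y(2) by simp
qed

lemma Q_sub: "C \<in> Q \<Longrightarrow> C \<subseteq> X"
  using cls_sub by (metis QE)

lemma Q_ne: "C \<in> Q \<Longrightarrow> C \<noteq> {}"
  by (metis QE cls_self empty_iff)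

lemma Q_conv: "C \<in> Q \<Longrightarrow> convex X r C"
  by (metis QE cls_conv)

lemma JQ: "J \<in> Q"
proof -
  obtain j where j: "j \<in> J" using J_ne by blast
  then have "cls j = J" by (rule cls_J)
  then show ?thesis using clsQ[of j] j J_sub by auto
qed

lemma Q_disj: "C \<in> Q \<Longrightarrow> D \<in> Q \<Longrightarrow> C \<noteq> D \<Longrightarrow> C \<inter> D = {}"
  by (metis QE cls_disj)

lemma qr_iff:
  assumes C: "C \<in> Q" and D: "D \<in> Q" and ne: "C \<noteq> D" and x: "x \<in> C" and y: "y \<in> D"
  shows "(C, D) \<in> qr \<longleftrightarrow> (x, y) \<in> r"
proof
  assume "(C, D) \<in> qr"
  then show "(x, y) \<in> r" using ne x y unfolding quot_rel_def by blast
next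
  assume xy: "(x, y) \<in> r"
  have dis: "C \<inter> D = {}" using Q_disj[OF C D ne] .
  have "(\<forall>c\<in>C. \<forall>d\<in>D. (c, d) \<in> r) \<or> (\<forall>c\<in>C. \<forall>d\<in>D. (d, c) \<in> r)"
    using convex_disjoint[OF Q_conv[OF C] Q_conv[OF D] dis] .
  moreover have "(y, x) \<notin> r"
  proof
    assume "(y, x) \<in> r"
    then have "x = y" using xy le_antisym by blast
    then show False using dis x y by blast
  qed
  ultimately have "\<forall>c\<in>C. \<forall>d\<in>D. (c, d) \<in> r" using x y by blast
  then show "(C, D) \<in> qr" unfolding quot_rel_def using C D by blast
qed

lemma qr_lt:
  assumes C: "C \<in> Q" and D: "D \<in> Q" and ne: "C \<noteq> D" and x: "x \<in> C" and y: "y \<in> D"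
  shows "order_lt qr C D \<longleftrightarrow> order_lt r x y"
proof -
  have "x \<noteq> y" using Q_disj[OF C D ne] x y by blast
  then show ?thesis unfolding order_lt_def using qr_iff[OF assms] ne by simp
qed

lemma qr_sub: "(C, D) \<in> qr \<Longrightarrow> C \<in> Q \<and> D \<in> Q"
  unfolding quot_rel_def by blast

lemma qr_refl: "C \<in> Q \<Longrightarrow> (C, C) \<in> qr"
  unfolding quot_rel_def by blast

lemma lin_Q0: "linear_order_on Q qr"
proof -
  have a: "qr \<subseteq> Q \<times> Q" unfolding quot_rel_def by blast
  have b: "refl_on Q qr" unfolding refl_on_def using qr_refl by blast
  have c: "trans qr"
  proof (rule transI)
    fix C D E assume CD: "(C, D) \<in> qr" and DE: "(D, E) \<in> qr"
    have Q: "C \<in> Q" "D \<in> Q" "E \<in> Q" using qr_sub CD DE by auto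
    show "(C, E) \<in> qr"
    proof (cases "C = D \<or> D = E \<or> C = E")
      case True
      then consider "C = D" | "D = E" | "C = E" by blast
      then show ?thesis
      proof cases
        case 1 then show ?thesis using DE by simp
      next
        case 2 then show ?thesis using CD by simp
      next
        case 3 then show ?thesis using qr_refl Q(1) by simp
      qed
    next
      case False
      then have ne: "C \<noteq> D" "D \<noteq> E" "C \<noteq> E" by auto
      obtain c where c: "c \<in> C" using Q Q_ne by blast
      obtain d where d: "d \<in> D" using Q Q_ne by blast
      obtain e where e: "e \<in> E" using Q Q_ne by blast
      have "(c, d) \<in> r" using qr_iff[OF Q(1,2) ne(1) c d] CD by simp
      moreover have "(d, e) \<in> r" using qr_iff[OF Q(2,3) ne(2) d e] DE by simp
      ultimately have "(c, e) \<in> r" by (rule le_trans)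
      then show ?thesis using qr_iff[OF Q(1,3) ne(3) c e] by simp
    qed
  qed
  have d: "antisym qr"
  proof (rule antisymI)
    fix C D assume CD: "(C, D) \<in> qr" and DC: "(D, C) \<in> qr"
    show "C = D"
    proof (rule ccontr)
      assume ne: "C \<noteq> D"
      have Q: "C \<in> Q" "D \<in> Q" using qr_sub CD by auto
      obtain c where c: "c \<in> C" using Q Q_ne by blast
      obtain d where d: "d \<in> D" using Q Q_ne by blast
      have cd: "c \<in> C" "d \<in> D" using c d by auto
      have ne': "D \<noteq> C" using ne by simp
      have "(c, d) \<in> r" using qr_iff[OF Q(1,2) ne c d] CD by simp
      moreover have "(d, c) \<in> r" using qr_iff[OF Q(2,1) ne' d c] DC by simp
      ultimately have "c = d" using le_antisym by blast
      then show False using Q_disj[OF Q ne] cd by blast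
    qed
  qed
  have e: "total_on Q qr"
    unfolding total_on_def
  proof (intro ballI impI)
    fix C D assume Q: "C \<in> Q" "D \<in> Q" and ne: "C \<noteq> D"
    obtain c where c: "c \<in> C" using Q Q_ne by blast
    obtain d where d: "d \<in> D" using Q Q_ne by blast
    have ne': "D \<noteq> C" using ne by simp
    have "c \<in> X" "d \<in> X" using Q_sub Q c d by blast+
    then have "(c, d) \<in> r \<or> (d, c) \<in> r" using le_total by blast
    then show "(C, D) \<in> qr \<or> (D, C) \<in> qr"
      using qr_iff[OF Q(1,2) ne c d] qr_iff[OF Q(2,1) ne' d c] by simp
  qed
  show "linear_order_on Q qr"
    unfolding linear_order_on_def partial_order_on_def preorder_on_def using a b c d e by (intro conjI)
qed

lemma lin_Q: "lin Q qr"
  using lin_Q0 by (rule lin.intro)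

end


context base
begin

definition sig :: "'a set \<Rightarrow> 'a \<Rightarrow> 'a" where
  "sig C = (SOME s. s \<in> G \<and> s ` J = C)"

lemma sig_ex: assumes C: "C \<in> Q" shows "\<exists>s. s \<in> G \<and> s ` J = C"
proof -
  obtain x where x: "x \<in> X" "C = cls x" using C by (rule QE)
  obtain g where g: "g \<in> G" "g x \<in> J" using exists_g[OF x(1)] by blast
  have c: "cls x = {y \<in> X. g y \<in> J}" using cls_char[OF x(1) g] .
  have "g ` cls x = J"
  proof
    show "g ` cls x \<subseteq> J" using c by auto
    show "J \<subseteq> g ` cls x"
    proof
      fix j assume j: "j \<in> J"
      have "ginv X g j \<in> cls x" using c j J_sub ginv_mem[OF g(1)] ginv_r[OF g(1)] by auto
      moreover have "j = g (ginv X g j)" using ginv_r[OF g(1)] by simp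
      ultimately show "j \<in> g ` cls x" by blast
    qed
  qed
  then have "ginv X g ` J = cls x" using ginv_img[OF g(1)] by blast
  then show ?thesis using Aut_ginv[OF g(1)] x(2) by (intro exI[of _ "ginv X g"]) simp
qed

lemma sig: assumes "C \<in> Q" shows "sig C \<in> G" "sig C ` J = C"
proof -
  have "sig C \<in> G \<and> sig C ` J = C" unfolding sig_def using someI_ex[OF sig_ex[OF assms]] .
  then show "sig C \<in> G" "sig C ` J = C" by auto
qed

lemma sig_inv_img: "C \<in> Q \<Longrightarrow> ginv X (sig C) ` C = J"
  by (rule ginv_img[OF sig(1) sig(2)])

lemma sig_inJ: "C \<in> Q \<Longrightarrow> x \<in> C \<Longrightarrow> ginv X (sig C) x \<in> J"
  using sig_inv_img[of C] by (simp add: image_iff) (metis imageI)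

lemma sig_inC: "C \<in> Q \<Longrightarrow> j \<in> J \<Longrightarrow> sig C j \<in> C"
  using sig(2)[of C] by (metis imageI)

lemma sig_ginv: "C \<in> Q \<Longrightarrow> sig C (ginv X (sig C) x) = x"
  by (rule ginv_r[OF sig(1)])

lemma ginv_sig: "C \<in> Q \<Longrightarrow> ginv X (sig C) (sig C x) = x"
  by (rule ginv_l[OF sig(1)])

definition pi :: "('a \<Rightarrow> 'a) \<Rightarrow> 'a set \<Rightarrow> 'a set" where
  "pi g = (\<lambda>C. if C \<in> Q then g ` C else C)"

lemma pi_cls: "g \<in> G \<Longrightarrow> x \<in> X \<Longrightarrow> pi g (cls x) = cls (g x)"
  unfolding pi_def using clsQ cls_img by simp

lemma pi_Q: assumes g: "g \<in> G" and C: "C \<in> Q" shows "pi g C \<in> Q"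
proof -
  obtain x where x: "x \<in> X" "C = cls x" using C by (rule QE)
  show ?thesis using pi_cls[OF g x(1)] x clsQ Aut_mem[OF g x(1)] by simp
qed

lemma pi_comp: assumes g: "g \<in> G" and h: "h \<in> G" shows "pi (g \<circ> h) = pi g \<circ> pi h"
proof
  fix C
  show "pi (g \<circ> h) C = (pi g \<circ> pi h) C"
  proof (cases "C \<in> Q")
    case True
    then have "pi h C \<in> Q" using pi_Q[OF h] by blast
    then show ?thesis using True unfolding pi_def by (simp add: image_comp)
  next
    case False
    then show ?thesis unfolding pi_def by simp
  qed
qed

lemma pi_id: "pi id = id"
  unfolding pi_def by (rule ext) simp

interpretation QL: lin Q qr by (rule lin_Q)

lemma pi_inv_r: assumes g: "g \<in> G" shows "pi g (pi (ginv X g) C) = C"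
proof -
  have "pi g (pi (ginv X g) C) = pi (g \<circ> ginv X g) C" using pi_comp[OF g Aut_ginv[OF g]] by simp
  also have "\<dots> = C" using ginv_comp_r[OF g] pi_id by simp
  finally show ?thesis .
qed

lemma pi_inv_l: assumes g: "g \<in> G" shows "pi (ginv X g) (pi g C) = C"
proof -
  have "pi (ginv X g) (pi g C) = pi (ginv X g \<circ> g) C" using pi_comp[OF Aut_ginv[OF g] g] by simp
  also have "\<dots> = C" using ginv_comp_l[OF g] pi_id by simp
  finally show ?thesis .
qed

lemma pi_Aut: assumes g: "g \<in> G" shows "pi g \<in> Aut Q qr"
proof (rule QL.Aut_intro)
  show "pi g C \<in> Q" if "C \<in> Q" for C using pi_Q[OF g that] .
  show "\<exists>C\<in>Q. pi g C = D" if "D \<in> Q" for D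
    by (rule bexI[of _ "pi (ginv X g) D"]) (use pi_inv_r[OF g] pi_Q[OF Aut_ginv[OF g] that] in auto)
  show "order_lt qr (pi g C) (pi g D)" if C: "C \<in> Q" and D: "D \<in> Q" and CD: "order_lt qr C D" for C D
  proof -
    have ne: "C \<noteq> D" using CD unfolding order_lt_def by blast
    obtain x where x: "x \<in> C" using C Q_ne by blast
    obtain y where y: "y \<in> D" using D Q_ne by blast
    have xX: "x \<in> X" and yX: "y \<in> X" using Q_sub C D x y by blast+
    have Cx: "C = cls x" and Dy: "D = cls y" using Q_mem_cls C D x y by auto
    have "order_lt r x y" using qr_lt[OF C D ne x y] CD by simp
    then have lt: "order_lt r (g x) (g y)" using Aut_lt[OF g xX yX] by simp
    have e1: "pi g C = cls (g x)" and e2: "pi g D = cls (g y)" using pi_cls[OF g] xX yX Cx Dy by auto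
    have ne2: "pi g C \<noteq> pi g D"
    proof
      assume "pi g C = pi g D"
      then have "pi (ginv X g) (pi g C) = pi (ginv X g) (pi g D)" by simp
      then show False using pi_inv_l[OF g] ne by simp
    qed
    have gxX: "g x \<in> X" and gyX: "g y \<in> X" using Aut_mem[OF g] xX yX by auto
    have "order_lt qr (cls (g x)) (cls (g y))"
      using qr_lt[OF clsQ[OF gxX] clsQ[OF gyX] _ cls_self[OF gxX] cls_self[OF gyX]] ne2 e1 e2 lt by simp
    then show ?thesis using e1 e2 by simp
  qed
  show "pi g C = C" if "C \<notin> Q" for C using that unfolding pi_def by simp
qed

lemma pi_ginv: assumes g: "g \<in> G" shows "pi (ginv X g) = ginv Q (pi g)"
proof
  fix C
  show "pi (ginv X g) C = ginv Q (pi g) C"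
  proof (cases "C \<in> Q")
    case True
    have "ginv Q (pi g) (pi g (pi (ginv X g) C)) = pi (ginv X g) C"
      using QL.ginv_l[OF pi_Aut[OF g]] .
    then show ?thesis using pi_inv_r[OF g] by simp
  next
    case False
    then show ?thesis unfolding pi_def ginv_def by simp
  qed
qed

end


context base
begin

interpretation QL: lin Q qr by (rule lin_Q)

abbreviation "rJ \<equiv> restrict_rel r J"

lemma lin_J: "lin J rJ" by (rule lin_restr[OF J_sub])

interpretation JL: lin J rJ by (rule lin_J)

definition Lg :: "('a set \<Rightarrow> 'a set) \<Rightarrow> ('a set \<Rightarrow> 'a \<Rightarrow> 'a) \<Rightarrow> 'a \<Rightarrow> 'a" where
  "Lg h j x = (if x \<in> X then sig (h (cls x)) (j (cls x) (ginv X (sig (cls x)) x)) else x)"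

lemma Lg_eval: "x \<in> X \<Longrightarrow> Lg h j x = sig (h (cls x)) (j (cls x) (ginv X (sig (cls x)) x))"
  unfolding Lg_def by simp

definition "famJ j \<longleftrightarrow> (\<forall>C\<in>Q. j C \<in> Aut J rJ)"

lemma famJ_id: "famJ (\<lambda>_. id)"
  unfolding famJ_def using JL.Aut_id by blast

lemma Lg_in:
  assumes h: "h \<in> Aut Q qr" and j: "famJ j" and x: "x \<in> X"
  shows "Lg h j x \<in> h (cls x)"
proof -
  define C where "C = cls x"
  have CQ: "C \<in> Q" unfolding C_def using clsQ[OF x] .
  have "ginv X (sig C) x \<in> J" using sig_inJ[OF CQ] cls_self[OF x] unfolding C_def by blast
  then have "j C (ginv X (sig C) x) \<in> J" using JL.Aut_mem j CQ unfolding famJ_def by blast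
  moreover have "h C \<in> Q" using QL.Aut_mem[OF h CQ] .
  ultimately have "sig (h C) (j C (ginv X (sig C) x)) \<in> h C" using sig_inC by blast
  then show ?thesis unfolding Lg_def C_def using x by simp
qed

lemma Lg_X:
  assumes h: "h \<in> Aut Q qr" and j: "famJ j" and x: "x \<in> X"
  shows "Lg h j x \<in> X"
  using Lg_in[OF assms] Q_sub QL.Aut_mem[OF h clsQ[OF x]] by blast

lemma Lg_cls:
  assumes h: "h \<in> Aut Q qr" and j: "famJ j" and x: "x \<in> X"
  shows "cls (Lg h j x) = h (cls x)"
  using Q_mem_cls[OF QL.Aut_mem[OF h clsQ[OF x]] Lg_in[OF assms]] .

lemma Lg_Aut:
  assumes h: "h \<in> Aut Q qr" and j: "famJ j"
  shows "Lg h j \<in> G"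
proof (rule Aut_intro)
  show "Lg h j x \<in> X" if "x \<in> X" for x using Lg_X[OF h j that] .
  show "\<exists>x\<in>X. Lg h j x = y" if y: "y \<in> X" for y
  proof -
    define D where "D = cls y"
    have DQ: "D \<in> Q" unfolding D_def using clsQ[OF y] .
    define C where "C = ginv Q h D"
    have CQ: "C \<in> Q" unfolding C_def using QL.ginv_mem[OF h DQ] .
    have hC: "h C = D" unfolding C_def using QL.ginv_r[OF h] .
    define z where "z = ginv X (sig D) y"
    have zJ: "z \<in> J" unfolding z_def using sig_inJ[OF DQ] cls_self[OF y] unfolding D_def by blast
    have jC: "j C \<in> Aut J rJ" using j CQ unfolding famJ_def by blast
    have "z \<in> j C ` J" using JL.Aut_image[OF jC] zJ by simp
    then obtain w where w: "w \<in> J" "j C w = z" by blast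
    define x where "x = sig C w"
    have xC: "x \<in> C" unfolding x_def using sig_inC[OF CQ w(1)] .
    have xX: "x \<in> X" using Q_sub[OF CQ] xC by blast
    have clsx: "cls x = C" using Q_mem_cls[OF CQ xC] .
    have "Lg h j x = sig (h C) (j C (ginv X (sig C) (sig C w)))"
      unfolding Lg_def using xX clsx x_def by simp
    also have "\<dots> = sig D (j C w)" using ginv_sig[OF CQ] hC by simp
    also have "\<dots> = y" using w(2) sig_ginv[OF DQ] unfolding z_def by simp
    finally show ?thesis using xX by (intro bexI[of _ x])
  qed
  show "order_lt r (Lg h j x) (Lg h j y)" if xX: "x \<in> X" and yX: "y \<in> X" and xy: "order_lt r x y" for x y
  proof (cases "cls x = cls y")
    case True
    define C where "C = cls x"
    have CQ: "C \<in> Q" unfolding C_def using clsQ[OF xX] .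
    have yC: "y \<in> C" using cls_self[OF yX] True unfolding C_def by simp
    have xC: "x \<in> C" using cls_self[OF xX] unfolding C_def by simp
    have sg: "sig C \<in> G" using sig(1)[OF CQ] .
    have a: "ginv X (sig C) x \<in> J" "ginv X (sig C) y \<in> J" using sig_inJ[OF CQ] xC yC by auto
    have "order_lt r (ginv X (sig C) x) (ginv X (sig C) y)" using Aut_lt[OF Aut_ginv[OF sg] xX yX] xy by simp
    then have "order_lt rJ (ginv X (sig C) x) (ginv X (sig C) y)" using lt_restr[OF a, of r] by simp
    moreover have jC: "j C \<in> Aut J rJ" using j CQ unfolding famJ_def by blast
    ultimately have "order_lt rJ (j C (ginv X (sig C) x)) (j C (ginv X (sig C) y))"
      using JL.Aut_lt[OF jC a] by simp
    moreover have b: "j C (ginv X (sig C) x) \<in> J" "j C (ginv X (sig C) y) \<in> J" using JL.Aut_mem[OF jC] a by auto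
    ultimately have "order_lt r (j C (ginv X (sig C) x)) (j C (ginv X (sig C) y))" using lt_restr[OF b, of r] by simp
    moreover have hCQ: "h C \<in> Q" using QL.Aut_mem[OF h CQ] .
    moreover have "j C (ginv X (sig C) x) \<in> X" "j C (ginv X (sig C) y) \<in> X" using b J_sub by auto
    ultimately have "order_lt r (sig (h C) (j C (ginv X (sig C) x))) (sig (h C) (j C (ginv X (sig C) y)))"
      using Aut_lt[OF sig(1)[OF hCQ]] by simp
    then show ?thesis unfolding Lg_def using xX yX True C_def by simp
  next
    case False
    have CQ: "cls x \<in> Q" "cls y \<in> Q" using clsQ xX yX by auto
    have "order_lt qr (cls x) (cls y)" using qr_lt[OF CQ False cls_self[OF xX] cls_self[OF yX]] xy by simp
    then have lt: "order_lt qr (h (cls x)) (h (cls y))" using QL.Aut_lt[OF h CQ] by simp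
    have hQ: "h (cls x) \<in> Q" "h (cls y) \<in> Q" using QL.Aut_mem[OF h] CQ by auto
    have ne: "h (cls x) \<noteq> h (cls y)" using lt unfolding order_lt_def by blast
    show ?thesis using qr_lt[OF hQ ne Lg_in[OF h j xX] Lg_in[OF h j yX]] lt by simp
  qed
  show "Lg h j x = x" if "x \<notin> X" for x unfolding Lg_def using that by simp
qed

lemma pi_Lg:
  assumes h: "h \<in> Aut Q qr" and j: "famJ j"
  shows "pi (Lg h j) = h"
proof
  fix C
  show "pi (Lg h j) C = h C"
  proof (cases "C \<in> Q")
    case True
    obtain x where x: "x \<in> X" "C = cls x" using True by (rule QE)
    show ?thesis using pi_cls[OF Lg_Aut[OF h j] x(1)] Lg_cls[OF h j x(1)] x(2) by simp
  next
    case False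
    then show ?thesis unfolding pi_def using QL.Aut_out[OF h False] by simp
  qed
qed

lemma L_fix:
  assumes x: "x \<in> X" and hx: "h (cls x) = cls x"
  shows "Lg h (\<lambda>_. id) x = x"
  unfolding Lg_def using x hx sig_ginv[OF clsQ[OF x]] by simp

lemma L_eval:
  assumes x: "x \<in> X"
  shows "Lg h (\<lambda>_. id) x = sig (h (cls x)) (ginv X (sig (cls x)) x)"
  unfolding Lg_def using x by simp

lemma Lg_cong: "(\<And>C. C \<in> Q \<Longrightarrow> j C = j' C) \<Longrightarrow> Lg h j = Lg h j'"
  unfolding Lg_def using clsQ by (intro ext) simp

lemma Lg_id_comp:
  assumes j: "famJ j" and j': "famJ j'"
  shows "Lg id j \<circ> Lg id j' = Lg id (\<lambda>C. j C \<circ> j' C)"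
proof
  fix x
  show "(Lg id j \<circ> Lg id j') x = Lg id (\<lambda>C. j C \<circ> j' C) x"
  proof (cases "x \<in> X")
    case True
    define C where "C = cls x"
    have CQ: "C \<in> Q" unfolding C_def using clsQ[OF True] .
    have y: "Lg id j' x \<in> X" using Lg_X[OF QL.Aut_id j' True] .
    have cy: "cls (Lg id j' x) = C" using Lg_cls[OF QL.Aut_id j' True] unfolding C_def by simp
    have e: "Lg id j' x = sig C (j' C (ginv X (sig C) x))" using Lg_eval[OF True] unfolding C_def by simp
    have "(Lg id j \<circ> Lg id j') x = sig C (j C (ginv X (sig C) (Lg id j' x)))"
      using Lg_eval[OF y, of id j] cy by simp
    also have "\<dots> = sig C (j C (j' C (ginv X (sig C) x)))" using e ginv_sig[OF CQ] by simp
    finally show ?thesis using Lg_eval[OF True, of id] unfolding C_def by simp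
  next
    case False
    then show ?thesis unfolding Lg_def by simp
  qed
qed

end


locale main = base X r J for X :: "'a set" and r :: "'a rel" and J :: "'a set" +
  fixes T :: "'a set \<Rightarrow> 'a rel \<Rightarrow> 'a \<Rightarrow> 'a set \<Rightarrow> bool"
  assumes T_mono: "\<And>S' r' a V V'. T S' r' a V \<Longrightarrow> V \<subseteq> V' \<Longrightarrow> T S' r' a V'"
    and T_interX: "\<And>a V1 V2. T X r a V1 \<Longrightarrow> T X r a V2 \<Longrightarrow> T X r a (V1 \<inter> V2)"
    and T_interJ: "\<And>a V1 V2. T J (restrict_rel r J) a V1 \<Longrightarrow> T J (restrict_rel r J) a V2 \<Longrightarrow>
                     T J (restrict_rel r J) a (V1 \<inter> V2)"
    and T_inv: "\<And>g a V. g \<in> Aut X r \<Longrightarrow> T X r a V \<Longrightarrow> T X r (g a) (g ` V)"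
    and T_restr: "\<And>b V. b \<in> J \<Longrightarrow> T X r b V \<Longrightarrow> T J (restrict_rel r J) b (V \<inter> J)"
    and T_ext: "\<And>b V. b \<in> J \<Longrightarrow> T J (restrict_rel r J) b V \<Longrightarrow> T X r b (V \<union> (X - J))"
    and T_open: "\<And>x. x \<in> J \<Longrightarrow> T X r x J"
begin

interpretation QL: lin Q qr by (rule lin_Q)
interpretation JL: lin J rJ by (rule lin_J)

definition restrJ :: "('a \<Rightarrow> 'a) \<Rightarrow> 'a \<Rightarrow> 'a" where
  "restrJ f = (\<lambda>x. if x \<in> J then f x else x)"

lemma restrJ_Aut': "g \<in> G \<Longrightarrow> g ` J = J \<Longrightarrow> restrJ g \<in> Aut J rJ"
  unfolding restrJ_def by (rule restrJ_Aut[OF J_conv])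

lemma thmA:
  assumes H: "RPb T X r"
  shows "RPb T J rJ"
  unfolding RPb_def
proof (intro allI impI)
  fix A W assume A: "finite A \<and> A \<subseteq> J \<and> (\<forall>a\<in>A. T J rJ a (W a))"
  show "\<exists>F. finite F \<and> F \<subseteq> Aut J rJ \<and> Aut J rJ \<subseteq> dc (basic J rJ A W) F"
  proof (cases "A = {}")
    case True
    have "Aut J rJ \<subseteq> dc (basic J rJ A W) {id}"
    proof
      fix k assume k: "k \<in> Aut J rJ"
      have "k \<in> basic J rJ A W" using k True unfolding basic_def by simp
      moreover have "id \<in> basic J rJ A W" using JL.Aut_id True unfolding basic_def by simp
      ultimately show "k \<in> dc (basic J rJ A W) {id}" by (intro dcI[of k _ id _ id]) auto
    qed
    then show ?thesis using JL.Aut_id by (intro exI[of _ "{id}"]) simp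
  next
    case False
    then obtain x0 where x0: "x0 \<in> A" by blast
    have x0J: "x0 \<in> J" using A x0 by blast
    define W' where "W' a = (if a = x0 then (W a \<union> (X - J)) \<inter> J else W a \<union> (X - J))" for a
    have T': "\<forall>a\<in>A. T X r a (W' a)"
    proof
      fix a assume a: "a \<in> A"
      have aJ: "a \<in> J" using A a by blast
      have 1: "T X r a (W a \<union> (X - J))" using T_ext[OF aJ] A a by blast
      show "T X r a (W' a)"
      proof (cases "a = x0")
        case True
        then show ?thesis unfolding W'_def using T_interX[OF 1 T_open[OF aJ]] by simp
      next
        case False
        then show ?thesis unfolding W'_def using 1 by simp
      qed
    qed
    have AX: "A \<subseteq> X" using A J_sub by blast
    have "\<exists>F. finite F \<and> F \<subseteq> G \<and> G \<subseteq> dc (basic X r A W') F"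
      using H A AX T' unfolding RPb_def by simp
    then obtain F' where F': "finite F'" "F' \<subseteq> G" "G \<subseteq> dc (basic X r A W') F'" by blast
    define F where "F = restrJ ` {f \<in> F'. f ` J = J}"
    have finF: "finite F" unfolding F_def using F'(1) by simp
    have FA: "F \<subseteq> Aut J rJ" unfolding F_def using F'(2) restrJ_Aut' by blast
    have uJ: "u ` J = J" if u: "u \<in> basic X r A W'" for u
    proof -
      have "u x0 \<in> W' x0" using u x0 unfolding basic_def by blast
      then have "u x0 \<in> J" unfolding W'_def by simp
      then show ?thesis using regJ[OF _ x0J] u unfolding basic_def by blast
    qed
    have ub: "restrJ u \<in> basic J rJ A W" if u: "u \<in> basic X r A W'" for u
    proof -
      have uG: "u \<in> G" using u unfolding basic_def by blast
      have "restrJ u \<in> Aut J rJ" using restrJ_Aut'[OF uG uJ[OF u]] .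
      moreover have "restrJ u a \<in> W a" if a: "a \<in> A" for a
      proof -
        have aJ: "a \<in> J" using a A by blast
        have "u a \<in> J" using uJ[OF u] aJ by blast
        moreover have "u a \<in> W' a" using u a unfolding basic_def by blast
        ultimately have "u a \<in> W a" unfolding W'_def by (auto split: if_splits)
        then show ?thesis unfolding restrJ_def using aJ by simp
      qed
      ultimately show ?thesis unfolding basic_def by blast
    qed
    have "Aut J rJ \<subseteq> dc (basic J rJ A W) F"
    proof
      fix k assume k: "k \<in> Aut J rJ"
      have kG: "k \<in> G" using Aut_restr_sub[OF J_conv k] .
      then have "k \<in> dc (basic X r A W') F'" using F'(3) by blast
      then obtain u f v where ufv: "u \<in> basic X r A W'" "f \<in> F'" "v \<in> basic X r A W'" "k = u \<circ> f \<circ> v"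
        by (rule dcE)
      have uG: "u \<in> G" and vG: "v \<in> G" using ufv unfolding basic_def by auto
      have fG: "f \<in> G" using ufv F'(2) by blast
      have "ginv X u \<circ> k \<circ> ginv X v = (ginv X u \<circ> u) \<circ> f \<circ> (v \<circ> ginv X v)"
        using ufv(4) by (simp add: o_assoc)
      also have "\<dots> = f" using ginv_comp_l[OF uG] ginv_comp_r[OF vG] by simp
      finally have f_eq: "f = ginv X u \<circ> k \<circ> ginv X v" by simp
      have kJ: "k ` J = J" using JL.Aut_image[OF k] .
      have "f ` J = ginv X u ` (k ` (ginv X v ` J))" using f_eq by (simp add: image_comp)
      also have "\<dots> = J" using ginv_img[OF uG uJ[OF ufv(1)]] ginv_img[OF vG uJ[OF ufv(3)]] kJ by simp
      finally have fJ: "f ` J = J" .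
      have rf: "restrJ f \<in> F" unfolding F_def using ufv(2) fJ by blast
      have "k = restrJ u \<circ> restrJ f \<circ> restrJ v"
      proof
        fix x
        show "k x = (restrJ u \<circ> restrJ f \<circ> restrJ v) x"
        proof (cases "x \<in> J")
          case True
          have "v x \<in> J" using uJ[OF ufv(3)] True by blast
          moreover have "f (v x) \<in> J" using fJ calculation by blast
          ultimately show ?thesis using True ufv(4) unfolding restrJ_def by simp
        next
          case False
          then show ?thesis using JL.Aut_out[OF k False] unfolding restrJ_def by simp
        qed
      qed
      then show "k \<in> dc (basic J rJ A W) F" using ub[OF ufv(1)] ub[OF ufv(3)] rf by (intro dcI) auto
    qed
    then show ?thesis using finF FA by blast
  qed
qed

lemma T_cls: assumes x: "x \<in> X" shows "T X r x (cls x)"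
proof -
  define C where "C = cls x"
  have CQ: "C \<in> Q" unfolding C_def using clsQ[OF x] .
  have "ginv X (sig C) x \<in> J" using sig_inJ[OF CQ] cls_self[OF x] unfolding C_def by blast
  then have "T X r (ginv X (sig C) x) J" by (rule T_open)
  then have "T X r (sig C (ginv X (sig C) x)) (sig C ` J)" using T_inv[OF sig(1)[OF CQ]] by blast
  then show ?thesis using sig_ginv[OF CQ] sig(2)[OF CQ] unfolding C_def by simp
qed

lemma thmB:
  assumes H: "RPb T X r"
  shows "RPb Tperm Q qr"
  unfolding RPb_def
proof (intro allI impI)
  fix AQ WQ assume A: "finite AQ \<and> AQ \<subseteq> Q \<and> (\<forall>C\<in>AQ. Tperm Q qr C (WQ C))"
  define rep where "rep C = (SOME x. x \<in> C)" for C :: "'a set"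
  have rep: "rep C \<in> C" if "C \<in> Q" for C unfolding rep_def using Q_ne[OF that] some_in_eq by blast
  define A where "A = rep ` AQ"
  have AX: "A \<subseteq> X" unfolding A_def using rep A Q_sub by blast
  have finA: "finite A" unfolding A_def using A by simp
  have TA: "\<forall>a\<in>A. T X r a (cls a)" using T_cls AX by blast
  have "\<exists>F. finite F \<and> F \<subseteq> G \<and> G \<subseteq> dc (basic X r A cls) F"
    using H finA AX TA unfolding RPb_def by simp
  then obtain F' where F': "finite F'" "F' \<subseteq> G" "G \<subseteq> dc (basic X r A cls) F'" by blast
  have pb: "pi u \<in> basic Q qr AQ WQ" if u: "u \<in> basic X r A cls" for u
  proof -
    have uG: "u \<in> G" using u unfolding basic_def by blast
    have "pi u C \<in> WQ C" if C: "C \<in> AQ" for C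
    proof -
      have CQ: "C \<in> Q" using A C by blast
      have rA: "rep C \<in> A" unfolding A_def using C by blast
      have rX: "rep C \<in> X" using rA AX by blast
      have "u (rep C) \<in> cls (rep C)" using u rA unfolding basic_def by blast
      moreover have crep: "cls (rep C) = C" using Q_mem_cls[OF CQ rep[OF CQ]] .
      ultimately have "cls (u (rep C)) = C" using Q_mem_cls[OF CQ] by simp
      then have "pi u C = C" using pi_cls[OF uG rX] crep by simp
      then show ?thesis using A C unfolding Tperm_def by simp
    qed
    then show ?thesis using pi_Aut[OF uG] unfolding basic_def by blast
  qed
  have "Aut Q qr \<subseteq> dc (basic Q qr AQ WQ) (pi ` F')"
  proof
    fix h assume h: "h \<in> Aut Q qr"
    have gG: "Lg h (\<lambda>_. id) \<in> G" using Lg_Aut[OF h famJ_id] .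
    then have "Lg h (\<lambda>_. id) \<in> dc (basic X r A cls) F'" using F'(3) by blast
    then obtain u f v where ufv: "u \<in> basic X r A cls" "f \<in> F'" "v \<in> basic X r A cls"
      "Lg h (\<lambda>_. id) = u \<circ> f \<circ> v" by (rule dcE)
    have uG: "u \<in> G" and vG: "v \<in> G" using ufv unfolding basic_def by auto
    have fG: "f \<in> G" using ufv F'(2) by blast
    have "h = pi (u \<circ> f \<circ> v)" using pi_Lg[OF h famJ_id] ufv(4) by simp
    also have "\<dots> = pi u \<circ> pi f \<circ> pi v" using pi_comp Aut_comp uG vG fG by simp
    finally have "h = pi u \<circ> pi f \<circ> pi v" .
    then show "h \<in> dc (basic Q qr AQ WQ) (pi ` F')" using pb[OF ufv(1)] pb[OF ufv(3)] ufv(2)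
      by (intro dcI) auto
  qed
  moreover have "pi ` F' \<subseteq> Aut Q qr" using pi_Aut F'(2) by blast
  ultimately show "\<exists>F. finite F \<and> F \<subseteq> Aut Q qr \<and> Aut Q qr \<subseteq> dc (basic Q qr AQ WQ) F"
    using F'(1) by blast
qed

end


context main
begin

interpretation QL: lin Q qr by (rule lin_Q)
interpretation JL: lin J rJ by (rule lin_J)

lemma T_Inter:
  assumes "finite I" "I \<noteq> {}" "\<forall>i\<in>I. T J rJ b (V i)"
  shows "T J rJ b (\<Inter>i\<in>I. V i)"
  using assms
proof (induction I rule: finite_ne_induct)
  case (singleton x)
  then show ?case by simp
next
  case (insert x F)
  then show ?case using T_interJ by simp
qed

lemma thmC:
  assumes HJ: "RPb T J rJ" and HQ: "RPb Tperm Q qr"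
  shows "RPb T X r"
  unfolding RPb_def
proof (intro allI impI)
  fix A W assume A: "finite A \<and> A \<subseteq> X \<and> (\<forall>a\<in>A. T X r a (W a))"
  have AX: "A \<subseteq> X" using A by blast
  define BQ where "BQ = cls ` A"
  have BQQ: "BQ \<subseteq> Q" unfolding BQ_def using clsQ AX by blast
  have finBQ: "finite BQ" unfolding BQ_def using A by simp
  have "\<exists>F. finite F \<and> F \<subseteq> Aut Q qr \<and> Aut Q qr \<subseteq> dc (basic Q qr BQ (\<lambda>C. {C})) F"
    using HQ finBQ BQQ unfolding RPb_def Tperm_def by simp
  then obtain FQ where FQ: "finite FQ" "FQ \<subseteq> Aut Q qr" "Aut Q qr \<subseteq> dc (basic Q qr BQ (\<lambda>C. {C})) FQ"
    by blast
  define tau where "tau a = ginv X (sig (cls a)) a" for a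
  define AJ where "AJ = tau ` A"
  define V where "V a = {y \<in> J. sig (cls a) y \<in> W a}" for a
  define WJ where "WJ b = (\<Inter>a\<in>{a \<in> A. tau a = b}. V a)" for b
  have tauJ: "tau a \<in> J" if "a \<in> X" for a unfolding tau_def using sig_inJ[OF clsQ[OF that] cls_self[OF that]] .
  have AJJ: "AJ \<subseteq> J" unfolding AJ_def using tauJ AX by blast
  have finAJ: "finite AJ" unfolding AJ_def using A by simp
  have TV: "T J rJ (tau a) (V a)" if a: "a \<in> A" for a
  proof -
    define C where "C = cls a"
    have aX: "a \<in> X" using a AX by blast
    have CQ: "C \<in> Q" unfolding C_def using clsQ[OF aX] .
    have sg: "sig C \<in> G" using sig(1)[OF CQ] .
    have "T X r a (W a)" using A a by blast
    then have "T X r (ginv X (sig C) a) (ginv X (sig C) ` W a)" using T_inv[OF Aut_ginv[OF sg]] by blast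
    then have "T J rJ (tau a) (ginv X (sig C) ` W a \<inter> J)"
      using T_restr tauJ[OF aX] unfolding tau_def C_def by blast
    moreover have "ginv X (sig C) ` W a \<inter> J \<subseteq> V a"
    proof
      fix y assume y: "y \<in> ginv X (sig C) ` W a \<inter> J"
      then obtain w where w: "w \<in> W a" "y = ginv X (sig C) w" by blast
      have "sig C y = w" using w(2) sig_ginv[OF CQ] by simp
      then show "y \<in> V a" unfolding V_def C_def using y w(1) by simp
    qed
    ultimately show ?thesis using T_mono by blast
  qed
  have TWJ: "\<forall>b\<in>AJ. T J rJ b (WJ b)"
  proof
    fix b assume b: "b \<in> AJ"
    have fin: "finite {a \<in> A. tau a = b}" using A by simp
    have ne: "{a \<in> A. tau a = b} \<noteq> {}" using b unfolding AJ_def by blast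
    have "\<forall>a\<in>{a \<in> A. tau a = b}. T J rJ b (V a)" using TV by blast
    then show "T J rJ b (WJ b)" unfolding WJ_def using T_Inter[OF fin ne] by blast
  qed
  have "\<exists>F. finite F \<and> F \<subseteq> Aut J rJ \<and> Aut J rJ \<subseteq> dc (basic J rJ AJ WJ) F"
    using HJ finAJ AJJ TWJ unfolding RPb_def by simp
  then obtain FJ where FJ: "finite FJ" "FJ \<subseteq> Aut J rJ" "Aut J rJ \<subseteq> dc (basic J rJ AJ WJ) FJ"
    by blast
  have WJ_sub: "WJ (tau a) \<subseteq> V a" if "a \<in> A" for a unfolding WJ_def using that by blast
  define D where "D f = BQ \<union> {C \<in> Q. f C \<in> BQ}" for f
  have finD: "finite (D f)" if f: "f \<in> Aut Q qr" for f
  proof -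
    have "{C \<in> Q. f C \<in> BQ} \<subseteq> ginv Q f ` BQ"
    proof
      fix C assume C: "C \<in> {C \<in> Q. f C \<in> BQ}"
      then have "C = ginv Q f (f C)" using QL.ginv_l[OF f] by simp
      then show "C \<in> ginv Q f ` BQ" using C by blast
    qed
    then have "finite {C \<in> Q. f C \<in> BQ}" using finBQ finite_subset by blast
    then show ?thesis unfolding D_def using finBQ by simp
  qed
  define Lf where "Lf h = Lg h (\<lambda>_. id)" for h
  have LfG: "Lf h \<in> G" if "h \<in> Aut Q qr" for h unfolding Lf_def using Lg_Aut[OF that famJ_id] .
  define ext where "ext f q = (\<lambda>C. if C \<in> D f then q C else id)" for f and q :: "'a set \<Rightarrow> 'a \<Rightarrow> 'a"
  define E where "E = (\<Union>f\<in>FQ. (\<lambda>q. Lf f \<circ> Lg id (ext f q)) ` (PiE (D f) (\<lambda>_. FJ)))"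
  have famext: "famJ (ext f q)" if "q \<in> PiE (D f) (\<lambda>_. FJ)" for f q
    unfolding famJ_def ext_def using that FJ(2) JL.Aut_id by auto
  have finE: "finite E" unfolding E_def using FQ(1) FQ(2) finD FJ(1) by (auto intro!: finite_PiE)
  have EG: "E \<subseteq> G"
  proof
    fix e assume "e \<in> E"
    then obtain f q where fq: "f \<in> FQ" "q \<in> PiE (D f) (\<lambda>_. FJ)" "e = Lf f \<circ> Lg id (ext f q)"
      unfolding E_def by blast
    have "f \<in> Aut Q qr" using fq FQ(2) by blast
    then show "e \<in> G" using fq Aut_comp LfG Lg_Aut[OF QL.Aut_id famext] by simp
  qed
  have "G \<subseteq> dc (basic X r A W) E"
  proof
    fix g assume g: "g \<in> G"
    have "pi g \<in> Aut Q qr" using pi_Aut[OF g] .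
    then have "pi g \<in> dc (basic Q qr BQ (\<lambda>C. {C})) FQ" using FQ(3) by blast
    then obtain u1 f u2 where ufu: "u1 \<in> basic Q qr BQ (\<lambda>C. {C})" "f \<in> FQ" "u2 \<in> basic Q qr BQ (\<lambda>C. {C})"
      "pi g = u1 \<circ> f \<circ> u2" by (rule dcE)
    have u1A: "u1 \<in> Aut Q qr" and u2A: "u2 \<in> Aut Q qr" using ufu unfolding basic_def by auto
    have fA: "f \<in> Aut Q qr" using ufu FQ(2) by blast
    have u1B: "u1 C = C" if "C \<in> BQ" for C using ufu(1) that unfolding basic_def by blast
    have u2B: "u2 C = C" if "C \<in> BQ" for C using ufu(3) that unfolding basic_def by blast
    have Lu1: "Lf u1 \<in> G" and Lu2: "Lf u2 \<in> G" and Lff: "Lf f \<in> G" using LfG u1A u2A fA by auto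
    define k where "k = ginv X (Lf f) \<circ> ginv X (Lf u1) \<circ> g \<circ> ginv X (Lf u2)"
    have kG: "k \<in> G" unfolding k_def using Aut_comp Aut_ginv Lu1 Lu2 Lff g by simp
    have pik: "pi k = id"
    proof -
      have "pi k = pi (ginv X (Lf f)) \<circ> pi (ginv X (Lf u1)) \<circ> pi g \<circ> pi (ginv X (Lf u2))"
        unfolding k_def using pi_comp Aut_comp Aut_ginv Lu1 Lu2 Lff g by simp
      also have "\<dots> = ginv Q f \<circ> ginv Q u1 \<circ> (u1 \<circ> f \<circ> u2) \<circ> ginv Q u2"
        using pi_ginv Lu1 Lu2 Lff pi_Lg[OF _ famJ_id] u1A u2A fA ufu(4) unfolding Lf_def by simp
      also have "\<dots> = ginv Q f \<circ> (ginv Q u1 \<circ> u1) \<circ> f \<circ> (u2 \<circ> ginv Q u2)" by (simp add: o_assoc)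
      also have "\<dots> = ginv Q f \<circ> f" using QL.ginv_comp_l[OF u1A] QL.ginv_comp_r[OF u2A] by simp
      also have "\<dots> = id" using QL.ginv_comp_l[OF fA] .
      finally show ?thesis .
    qed
    have kcls: "cls (k x) = cls x" if "x \<in> X" for x using pi_cls[OF kG that] pik by simp
    have kC: "k ` C = C" if C: "C \<in> Q" for C
    proof -
      obtain x where x: "x \<in> X" "C = cls x" using C by (rule QE)
      show ?thesis using cls_img[OF kG x(1)] kcls[OF x(1)] x(2) by simp
    qed
    define jk where "jk C = restrJ (ginv X (sig C) \<circ> k \<circ> sig C)" for C
    have jkA: "jk C \<in> Aut J rJ" if C: "C \<in> Q" for C
    proof -
      have sg: "sig C \<in> G" using sig(1)[OF C] .
      have "(ginv X (sig C) \<circ> k \<circ> sig C) \<in> G" using Aut_comp Aut_ginv sg kG by simp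
      moreover have "(ginv X (sig C) \<circ> k \<circ> sig C) ` J = J"
      proof -
        have "(ginv X (sig C) \<circ> k \<circ> sig C) ` J = ginv X (sig C) ` (k ` (sig C ` J))"
          by (simp only: image_comp[symmetric])
        also have "\<dots> = J" using sig(2)[OF C] kC[OF C] sig_inv_img[OF C] by simp
        finally show ?thesis .
      qed
      ultimately show ?thesis unfolding jk_def by (rule restrJ_Aut')
    qed
    have famjk: "famJ jk" unfolding famJ_def using jkA by blast
    have k_Lg: "k = Lg id jk"
    proof
      fix x
      show "k x = Lg id jk x"
      proof (cases "x \<in> X")
        case True
        define C where "C = cls x"
        have CQ: "C \<in> Q" unfolding C_def using clsQ[OF True] .
        have t: "ginv X (sig C) x \<in> J" using sig_inJ[OF CQ] cls_self[OF True] unfolding C_def by blast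
        have "Lg id jk x = sig C (jk C (ginv X (sig C) x))" using Lg_eval[OF True] unfolding C_def by simp
        also have "\<dots> = sig C (ginv X (sig C) (k (sig C (ginv X (sig C) x))))"
          unfolding jk_def restrJ_def using t by simp
        also have "\<dots> = k x" using sig_ginv[OF CQ] by simp
        finally show ?thesis by simp
      next
        case False
        then show ?thesis using Aut_out[OF kG False] unfolding Lg_def by simp
      qed
    qed
    define Pr where "Pr C tr \<longleftrightarrow> jk C = fst tr \<circ> fst (snd tr) \<circ> snd (snd tr) \<and>
        (C \<in> D f \<longrightarrow> fst tr \<in> basic J rJ AJ WJ \<and> fst (snd tr) \<in> FJ \<and> snd (snd tr) \<in> basic J rJ AJ WJ) \<and>
        (C \<notin> D f \<longrightarrow> fst tr = id \<and> fst (snd tr) = id \<and> snd (snd tr) = jk C)" for C tr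
    have exC: "\<exists>tr. Pr C tr" if C: "C \<in> Q" for C
    proof (cases "C \<in> D f")
      case True
      have "jk C \<in> dc (basic J rJ AJ WJ) FJ" using jkA[OF C] FJ(3) by blast
      then obtain p q s where pqs: "p \<in> basic J rJ AJ WJ" "q \<in> FJ" "s \<in> basic J rJ AJ WJ" "jk C = p \<circ> q \<circ> s"
        by (rule dcE)
      show ?thesis unfolding Pr_def using True pqs by (intro exI[of _ "(p, q, s)"]) simp
    next
      case False
      show ?thesis unfolding Pr_def using False by (intro exI[of _ "(id, id, jk C)"]) simp
    qed
    have ex': "\<forall>C\<in>Q. \<exists>tr. Pr C tr"
    proof
      fix C assume "C \<in> Q" then show "\<exists>tr. Pr C tr" by (rule exC)
    qed
    obtain t where t0: "\<forall>C\<in>Q. Pr C (t C)" using bchoice[OF ex'] by blast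
    have t: "jk C = fst (t C) \<circ> fst (snd (t C)) \<circ> snd (snd (t C)) \<and>
        (C \<in> D f \<longrightarrow> fst (t C) \<in> basic J rJ AJ WJ \<and> fst (snd (t C)) \<in> FJ \<and> snd (snd (t C)) \<in> basic J rJ AJ WJ) \<and>
        (C \<notin> D f \<longrightarrow> fst (t C) = id \<and> fst (snd (t C)) = id \<and> snd (snd (t C)) = jk C)" if "C \<in> Q" for C
      using t0 that unfolding Pr_def by blast
    define p where "p C = fst (t C)" for C
    define q where "q C = fst (snd (t C))" for C
    define s where "s C = snd (snd (t C))" for C
    have jk_eq: "jk C = p C \<circ> q C \<circ> s C" if "C \<in> Q" for C using t[OF that] unfolding p_def q_def s_def by (elim conjE)
    have tD: "C \<in> D f \<longrightarrow> p C \<in> basic J rJ AJ WJ \<and> q C \<in> FJ \<and> s C \<in> basic J rJ AJ WJ" if "C \<in> Q" for C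
      using t[OF that] unfolding p_def q_def s_def by (elim conjE)
    have tN: "C \<notin> D f \<longrightarrow> p C = id \<and> q C = id \<and> s C = jk C" if "C \<in> Q" for C
      using t[OF that] unfolding p_def q_def s_def by (elim conjE)
    have pD: "p C \<in> basic J rJ AJ WJ" "q C \<in> FJ" "s C \<in> basic J rJ AJ WJ" if "C \<in> Q" "C \<in> D f" for C
      using mp[OF tD[OF that(1)] that(2)] by blast+
    have pN: "p C = id" "q C = id" "s C = jk C" if "C \<in> Q" "C \<notin> D f" for C
      using mp[OF tN[OF that(1)] that(2)] by simp_all
    have famp: "famJ p" unfolding famJ_def
    proof
      fix C assume C: "C \<in> Q"
      show "p C \<in> Aut J rJ"
      proof (cases "C \<in> D f")
        case True then show ?thesis using pD(1)[OF C] basic_sub by blast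
      next
        case False then show ?thesis using pN(1)[OF C] JL.Aut_id by simp
      qed
    qed
    have famq: "famJ q" unfolding famJ_def
    proof
      fix C assume C: "C \<in> Q"
      show "q C \<in> Aut J rJ"
      proof (cases "C \<in> D f")
        case True then show ?thesis using pD(2)[OF C] FJ(2) by blast
      next
        case False then show ?thesis using pN(2)[OF C] JL.Aut_id by simp
      qed
    qed
    have fams: "famJ s" unfolding famJ_def
    proof
      fix C assume C: "C \<in> Q"
      show "s C \<in> Aut J rJ"
      proof (cases "C \<in> D f")
        case True then show ?thesis using pD(3)[OF C] basic_sub by blast
      next
        case False then show ?thesis using pN(3)[OF C] jkA[OF C] by simp
      qed
    qed
    have famqs: "famJ (\<lambda>C. q C \<circ> s C)" using famq fams JL.Aut_comp unfolding famJ_def by blast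
    have "Lg id jk = Lg id (\<lambda>C. p C \<circ> (q C \<circ> s C))" using jk_eq by (intro Lg_cong) (simp add: o_assoc)
    also have "\<dots> = Lg id p \<circ> Lg id (\<lambda>C. q C \<circ> s C)" using Lg_id_comp[OF famp famqs] by simp
    also have "\<dots> = Lg id p \<circ> (Lg id q \<circ> Lg id s)" using Lg_id_comp[OF famq fams] by simp
    finally have kdec: "k = Lg id p \<circ> Lg id q \<circ> Lg id s" using k_Lg by (simp add: o_assoc)
    define q0 where "q0 = restrict q (D f)"
    have q0P: "q0 \<in> PiE (D f) (\<lambda>_. FJ)" unfolding q0_def using pD(2) D_def BQQ
      by (auto simp: PiE_def Pi_def)
    have qq0: "Lg id q = Lg id (ext f q0)"
    proof (rule Lg_cong)
      fix C assume C: "C \<in> Q"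
      show "q C = ext f q0 C"
      proof (cases "C \<in> D f")
        case True then show ?thesis unfolding ext_def q0_def by simp
      next
        case False then show ?thesis unfolding ext_def q0_def using pN(2)[OF C False] by simp
      qed
    qed
    have "Lf f \<circ> Lg id (ext f q0) \<in> (\<lambda>q. Lf f \<circ> Lg id (ext f q)) ` PiE (D f) (\<lambda>_. FJ)"
      using q0P by (rule imageI)
    then have "Lf f \<circ> Lg id (ext f q0) \<in> E" unfolding E_def by (rule UN_I[OF ufu(2)])
    then have eE: "Lf f \<circ> Lg id q \<in> E" using qq0 by simp
    have Pp: "Lg id p \<in> G" using Lg_Aut[OF QL.Aut_id famp] .
    have Ss: "Lg id s \<in> G" using Lg_Aut[OF QL.Aut_id fams] .
    define v1 where "v1 = Lf u1 \<circ> Lf f \<circ> Lg id p \<circ> ginv X (Lf f)"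
    define v2 where "v2 = Lg id s \<circ> Lf u2"
    have kx: "Lg id p (Lg id q (Lg id s y)) = ginv X (Lf f) (ginv X (Lf u1) (g (ginv X (Lf u2) y)))" for y
      using fun_cong[OF kdec, of y] unfolding k_def by simp
    have g_eq: "g = v1 \<circ> (Lf f \<circ> Lg id q) \<circ> v2"
    proof
      fix x
      have "(v1 \<circ> (Lf f \<circ> Lg id q) \<circ> v2) x =
          Lf u1 (Lf f (Lg id p (ginv X (Lf f) (Lf f (Lg id q (Lg id s (Lf u2 x)))))))"
        unfolding v1_def v2_def by simp
      also have "\<dots> = Lf u1 (Lf f (Lg id p (Lg id q (Lg id s (Lf u2 x)))))" using ginv_l[OF Lff] by simp
      also have "\<dots> = Lf u1 (Lf f (ginv X (Lf f) (ginv X (Lf u1) (g (ginv X (Lf u2) (Lf u2 x))))))" using kx by simp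
      also have "\<dots> = g x" using ginv_r[OF Lff] ginv_r[OF Lu1] ginv_l[OF Lu2] by simp
      finally show "g x = (v1 \<circ> (Lf f \<circ> Lg id q) \<circ> v2) x" by simp
    qed
    have v2b: "v2 \<in> basic X r A W"
    proof -
      have "v2 \<in> G" unfolding v2_def using Aut_comp Ss Lu2 by simp
      moreover have "v2 a \<in> W a" if a: "a \<in> A" for a
      proof -
        have aX: "a \<in> X" using a AX by blast
        define C where "C = cls a"
        have CB: "C \<in> BQ" unfolding C_def BQ_def using a by blast
        have CQ: "C \<in> Q" using CB BQQ by blast
        have CD: "C \<in> D f" unfolding D_def using CB by blast
        have "Lf u2 a = a" unfolding Lf_def using L_fix[OF aX] u2B CB unfolding C_def by simp
        then have "v2 a = sig C (s C (tau a))" unfolding v2_def tau_def C_def using Lg_eval[OF aX] by simp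
        moreover have "s C (tau a) \<in> WJ (tau a)" using pD(3)[OF CQ CD] a unfolding basic_def AJ_def by blast
        ultimately show ?thesis using WJ_sub[OF a] unfolding V_def C_def by auto
      qed
      ultimately show ?thesis unfolding basic_def by blast
    qed
    have v1b: "v1 \<in> basic X r A W"
    proof -
      have "v1 \<in> G" unfolding v1_def using Aut_comp Aut_ginv Lu1 Lff Pp by simp
      moreover have "v1 a \<in> W a" if a: "a \<in> A" for a
      proof -
        have aX: "a \<in> X" using a AX by blast
        define C' where "C' = cls a"
        have C'B: "C' \<in> BQ" unfolding C'_def BQ_def using a by blast
        have C'Q: "C' \<in> Q" using C'B BQQ by blast
        define x where "x = ginv X (Lf f) a"
        have xX: "x \<in> X" unfolding x_def using ginv_mem[OF Lff aX] .
        have Lfx: "Lf f x = a" unfolding x_def using ginv_r[OF Lff] .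
        define C where "C = cls x"
        have CQ: "C \<in> Q" unfolding C_def using clsQ[OF xX] .
        have fC: "f C = C'" using Lg_cls[OF fA famJ_id xX] Lfx unfolding Lf_def C_def C'_def by simp
        have CD: "C \<in> D f" unfolding D_def using CQ fC C'B by blast
        have "a = sig C' (ginv X (sig C) x)" using Lfx L_eval[OF xX, of f] fC unfolding Lf_def C_def by simp
        then have tx: "ginv X (sig C) x = tau a" unfolding tau_def C'_def[symmetric] using ginv_sig[OF C'Q] by metis
        define y where "y = p C (tau a)"
        have yW: "y \<in> WJ (tau a)" unfolding y_def using pD(1)[OF CQ CD] a unfolding basic_def AJ_def by blast
        then have yV: "y \<in> V a" using WJ_sub[OF a] by blast
        then have yJ: "y \<in> J" and syW: "sig C' y \<in> W a" unfolding V_def C'_def by auto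
        have Px: "Lg id p x = sig C y" using Lg_eval[OF xX, of id p] tx unfolding C_def y_def by simp
        have sCy: "sig C y \<in> C" using sig_inC[OF CQ yJ] .
        have sX: "sig C y \<in> X" using Q_sub[OF CQ] sCy by blast
        have csy: "cls (sig C y) = C" using Q_mem_cls[OF CQ sCy] .
        have "Lf f (sig C y) = sig C' y"
          using L_eval[OF sX, of f] csy fC ginv_sig[OF CQ] unfolding Lf_def by simp
        moreover have s'X: "sig C' y \<in> X" using Q_sub[OF C'Q] sig_inC[OF C'Q yJ] by blast
        moreover have "cls (sig C' y) = C'" using Q_mem_cls[OF C'Q sig_inC[OF C'Q yJ]] .
        ultimately have "Lf u1 (Lf f (sig C y)) = sig C' y"
          using L_fix[OF s'X] u1B[OF C'B] unfolding Lf_def by simp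
        then have "v1 a = sig C' y" unfolding v1_def using Px x_def by simp
        then show ?thesis using syW by simp
      qed
      ultimately show ?thesis unfolding basic_def by blast
    qed
    show "g \<in> dc (basic X r A W) E" using v1b v2b eE g_eq by (intro dcI) auto
  qed
  then show "\<exists>F. finite F \<and> F \<subseteq> G \<and> G \<subseteq> dc (basic X r A W) F" using finE EG by blast
qed

end


lemma base_intro:
  assumes "homogeneous_chain X r" "regular_interval X r J" "proper_interval X J"
  shows "base X r J"
proof -
  have h: "linear_order_on X r \<and> (\<forall>x\<in>X. \<forall>y\<in>X. \<exists>g\<in>Aut X r. g x = y)"
    using assms(1) unfolding homogeneous_chain_def .
  show ?thesis
  proof (rule base.intro)
    show "lin X r" using conjunct1[OF h] by (rule lin.intro)
    show "base_axioms X r J" by (rule base_axioms.intro[OF conjunct2[OF h] assms(2) assms(3)])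
  qed
qed

lemma main_order:
  assumes "homogeneous_chain X r" "regular_interval X r J" "proper_interval X J"
  shows "main X r J order_nbhd"
proof -
  interpret base X r J using base_intro[OF assms] .
  interpret JL: lin J "restrict_rel r J" by (rule lin_J)
  show ?thesis
    apply (rule main.intro[OF base_intro[OF assms]])
    apply (rule main_axioms.intro)
    subgoal by (rule on_mono)
    subgoal by (rule on_inter)
    subgoal by (rule JL.on_inter)
    subgoal by (rule on_inv)
    subgoal by (rule on_restr[OF J_conv])
    subgoal by (rule on_ext[OF J_conv])
    subgoal by (rule J_open)
    done
qed

lemma main_perm:
  assumes "homogeneous_chain X r" "regular_interval X r J" "proper_interval X J"
  shows "main X r J Tperm"
  apply (rule main.intro[OF base_intro[OF assms]])
  apply (rule main_axioms.intro)
  apply (simp_all add: Tperm_def)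
  apply blast
  done

lemma equiv_T:
  assumes "main X r J T"
  shows "RPb T X r \<longleftrightarrow> RPb T J (restrict_rel r J) \<and> RPb Tperm (quot_carrier X r J) (quot_rel X r J)"
proof -
  interpret main X r J T by (rule assms)
  show ?thesis
  proof
    assume H: "RPb T X r"
    show "RPb T J (restrict_rel r J) \<and> RPb Tperm (quot_carrier X r J) (quot_rel X r J)"
      using thmA[OF H] thmB[OF H] by (rule conjI)
  next
    assume H: "RPb T J (restrict_rel r J) \<and> RPb Tperm (quot_carrier X r J) (quot_rel X r J)"
    show "RPb T X r" using thmC H by blast
  qed
qed

lemma equiv_p:
  assumes "homogeneous_chain X r" "regular_interval X r J" "proper_interval X J"
  shows "RP_p X r \<longleftrightarrow> RP_p J (restrict_rel r J) \<and> RP_perm (quot_carrier X r J) (quot_rel X r J)"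
  using equiv_T[OF main_order[OF assms]] by (simp add: RP_p_iff RP_perm_iff)

lemma equiv_perm:
  assumes "homogeneous_chain X r" "regular_interval X r J" "proper_interval X J"
  shows "RP_perm X r \<longleftrightarrow> RP_perm J (restrict_rel r J) \<and> RP_perm (quot_carrier X r J) (quot_rel X r J)"
  using equiv_T[OF main_perm[OF assms]] by (simp add: RP_perm_iff)

theorem theorem5p2:
  fixes X :: "'a set" and r :: "'a rel"
  assumes "homogeneous_chain X r"
    and "\<not> simple_chain X r"
  shows "(RP_p X r \<longleftrightarrow>
            (\<forall>J. regular_interval X r J \<and> proper_interval X J \<longrightarrow>
                 RP_p J (restrict_rel r J) \<and> RP_perm (quot_carrier X r J) (quot_rel X r J)))
       \<and> (RP_p X r \<longleftrightarrow>
            (\<exists>J. regular_interval X r J \<and> proper_interval X J \<and>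
                 RP_p J (restrict_rel r J) \<and> RP_perm (quot_carrier X r J) (quot_rel X r J)))
       \<and> (RP_perm X r \<longleftrightarrow>
            (\<forall>J. regular_interval X r J \<and> proper_interval X J \<longrightarrow>
                 RP_perm J (restrict_rel r J) \<and> RP_perm (quot_carrier X r J) (quot_rel X r J)))
       \<and> (RP_perm X r \<longleftrightarrow>
            (\<exists>J. regular_interval X r J \<and> proper_interval X J \<and>
                 RP_perm J (restrict_rel r J) \<and> RP_perm (quot_carrier X r J) (quot_rel X r J)))"
proof -
  obtain J0 where J0: "regular_interval X r J0" "proper_interval X J0"
    using assms unfolding simple_chain_def by blast
  have p: "\<And>J. regular_interval X r J \<Longrightarrow> proper_interval X J \<Longrightarrow>
     RP_p X r \<longleftrightarrow> RP_p J (restrict_rel r J) \<and> RP_perm (quot_carrier X r J) (quot_rel X r J)"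
    using equiv_p[OF assms(1)] by blast
  have q: "\<And>J. regular_interval X r J \<Longrightarrow> proper_interval X J \<Longrightarrow>
     RP_perm X r \<longleftrightarrow> RP_perm J (restrict_rel r J) \<and> RP_perm (quot_carrier X r J) (quot_rel X r J)"
    using equiv_perm[OF assms(1)] by blast
  let ?P = "\<lambda>J. RP_p J (restrict_rel r J) \<and> RP_perm (quot_carrier X r J) (quot_rel X r J)"
  let ?R = "\<lambda>J. RP_perm J (restrict_rel r J) \<and> RP_perm (quot_carrier X r J) (quot_rel X r J)"
  let ?ok = "\<lambda>J. regular_interval X r J \<and> proper_interval X J"
  have p1: "RP_p X r \<longleftrightarrow> (\<forall>J. ?ok J \<longrightarrow> ?P J)"
  proof
    assume "RP_p X r" then show "\<forall>J. ?ok J \<longrightarrow> ?P J" using p by blast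
  next
    assume "\<forall>J. ?ok J \<longrightarrow> ?P J" then have "?P J0" using J0 by blast
    then show "RP_p X r" using p[OF J0] by blast
  qed
  have p2: "RP_p X r \<longleftrightarrow> (\<exists>J. ?ok J \<and> ?P J)"
  proof
    assume "RP_p X r" then have "?P J0" using p[OF J0] by blast
    then show "\<exists>J. ?ok J \<and> ?P J" using J0 by blast
  next
    assume "\<exists>J. ?ok J \<and> ?P J" then obtain J where "?ok J" "?P J" by blast
    then show "RP_p X r" using p by blast
  qed
  have q1: "RP_perm X r \<longleftrightarrow> (\<forall>J. ?ok J \<longrightarrow> ?R J)"
  proof
    assume "RP_perm X r" then show "\<forall>J. ?ok J \<longrightarrow> ?R J" using q by blast
  next
    assume "\<forall>J. ?ok J \<longrightarrow> ?R J" then have "?R J0" using J0 by blast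
    then show "RP_perm X r" using q[OF J0] by blast
  qed
  have q2: "RP_perm X r \<longleftrightarrow> (\<exists>J. ?ok J \<and> ?R J)"
  proof
    assume "RP_perm X r" then have "?R J0" using q[OF J0] by blast
    then show "\<exists>J. ?ok J \<and> ?R J" using J0 by blast
  next
    assume "\<exists>J. ?ok J \<and> ?R J" then obtain J where "?ok J" "?R J" by blast
    then show "RP_perm X r" using q by blast
  qed
  show ?thesis using p1 p2 q1 q2 by (intro conjI) simp_all
qed

end
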